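(* Let $0<s<1$ and let $f\in C(S^1,S^1)$ be a continuous function from the unit circle to the unit circle, with Fourier series $f(e^{it})\sim\sum_{n=-\infty}^{\infty}a_ne^{int}$. If $\sum_{n=0}^{\infty}n^{2s}|a_n|^2<\infty$, then $\sum_{n=-\infty}^{\infty}|n|^{2s}|a_n|^2<\infty$, i.e. $f\in H^s(S^1,S^1)$.
   Context: $S^1=\{z\in\mathbb C:|z|=1\}$. For an integrable function $f$ on $S^1$, $a_n=\frac{1}{2\pi}\int_{-\pi}^{\pi}f(e^{it})e^{-int}\,dt$ denotes its $n$-th Fourier coefficient. $H^s(S^1,S^1)$ denotes the set of measurable functions $f:S^1\to S^1$ with $\sum_{n\in\mathbb Z}|n|^{2s}|a_n|^2<\infty$. *)

theory Defs
  imports "HOL-Analysis.Analysis"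
begin

definition fourier_coeff :: "(complex \<Rightarrow> complex) \<Rightarrow> int \<Rightarrow> complex" where
  "fourier_coeff f n =
     integral {-pi..pi} (\<lambda>t. f (cis t) * cis (- (of_int n * t))) / complex_of_real (2 * pi)"

definition Hs_circle :: "real \<Rightarrow> (complex \<Rightarrow> complex) set" where
  "Hs_circle s = {f. f \<in> borel_measurable (restrict_space lborel (sphere 0 1))
                    \<and> f ` sphere 0 1 \<subseteq> sphere 0 1
                    \<and> (\<lambda>n::int. \<bar>real_of_int n\<bar> powr (2 * s) * (cmod (fourier_coeff f n))\<^sup>2) summable_on UNIV}"

end

theory Submission
  imports Defs
begin


definition ci :: "(complex \<Rightarrow> complex) \<Rightarrow> complex" where
  "ci h = integral {-pi..pi} (\<lambda>x. h (cis x)) / complex_of_real (2*pi)"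

definition ri :: "(complex \<Rightarrow> real) \<Rightarrow> real" where
  "ri g = integral {-pi..pi} (\<lambda>x. g (cis x)) / (2*pi)"

abbreviation cc :: "(complex \<Rightarrow> 'a::topological_space) \<Rightarrow> bool" where
  "cc h \<equiv> continuous_on (sphere (0::complex) 1) h"

lemma cc_cont: "cc h \<Longrightarrow> continuous_on A (\<lambda>x. h (cis x))"
  by (rule continuous_on_compose2[where t="sphere 0 1"]) (auto intro: continuous_intros)

lemma cc_int: fixes h :: "complex \<Rightarrow> 'a::banach" shows "cc h \<Longrightarrow> (\<lambda>x. h (cis x)) integrable_on {a..b}"
  by (rule integrable_continuous_interval) (rule cc_cont)

lemma fc_ci: "fourier_coeff h m = ci (\<lambda>z. h z * z powi (-m))"
  unfolding fourier_coeff_def ci_def by (simp add: cis_power_int)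

lemma ci_add: "cc h \<Longrightarrow> cc g \<Longrightarrow> ci (\<lambda>z. h z + g z) = ci h + ci g"
  unfolding ci_def by (simp add: integral_add cc_int add_divide_distrib)

lemma ci_diff: "cc h \<Longrightarrow> cc g \<Longrightarrow> ci (\<lambda>z. h z - g z) = ci h - ci g"
  unfolding ci_def by (simp add: integral_diff cc_int diff_divide_distrib)

lemma ci_cmult: "ci (\<lambda>z. c * h z) = c * ci h"
  unfolding ci_def by simp

lemma ci_sum: "finite I \<Longrightarrow> (\<And>i. i \<in> I \<Longrightarrow> cc (f i)) \<Longrightarrow> ci (\<lambda>z. \<Sum>i\<in>I. f i z) = (\<Sum>i\<in>I. ci (f i))"
  unfolding ci_def by (simp add: integral_sum cc_int sum_divide_distrib)

lemma ci_cnj: "ci (\<lambda>z. cnj (h z)) = cnj (ci h)"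
  unfolding ci_def by (simp add: integral_cnj)

lemma ci_real: "cc g \<Longrightarrow> ci (\<lambda>z. complex_of_real (g z)) = complex_of_real (ri g)"
  unfolding ci_def ri_def
  using has_integral_of_real[OF integrable_integral[OF cc_int[of g "-pi" pi]], where 'b=complex]
  by (simp add: integral_unique)

lemma ri_mono: "cc g \<Longrightarrow> cc g' \<Longrightarrow> (\<And>z. z \<in> sphere 0 1 \<Longrightarrow> g z \<le> g' z) \<Longrightarrow> ri g \<le> ri g'"
  unfolding ri_def
  by (intro divide_right_mono integral_le cc_int) auto

lemma ri_add: "cc g \<Longrightarrow> cc g' \<Longrightarrow> ri (\<lambda>z. g z + g' z) = ri g + ri g'"
  unfolding ri_def by (simp add: integral_add cc_int add_divide_distrib)

lemma ri_cmult: "ri (\<lambda>z. c * g z) = c * ri g"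
  unfolding ri_def by simp

lemma ri_const: "ri (\<lambda>z. c) = c"
  unfolding ri_def by simp

lemma integral_cis_int:
  fixes k :: int
  shows "integral {-pi..pi} (\<lambda>x. cis (of_int k * x)) = (if k = 0 then complex_of_real (2*pi) else 0)"
proof (cases "k = 0")
  case True then show ?thesis by (simp add: scaleR_conv_of_real)
next
  case False
  define F where "F w = exp (\<i> * of_int k * w) / (\<i> * of_int k)" for w :: complex
  have d: "((\<lambda>x. F (of_real x)) has_vector_derivative cis (of_int k * x)) (at x within {-pi..pi})" for x
  proof -
    have "(F has_field_derivative exp (\<i> * of_int k * of_real x)) (at (of_real x))"
      unfolding F_def using False
      by (auto intro!: derivative_eq_intros simp: field_simps)
    moreover have "exp (\<i> * of_int k * of_real x) = cis (of_int k * x)"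
      by (simp add: cis_conv_exp mult_ac)
    ultimately show ?thesis using has_vector_derivative_real_field by metis
  qed
  have "((\<lambda>x. cis (of_int k * x)) has_integral (F (of_real pi) - F (of_real (-pi)))) {-pi..pi}"
    by (rule fundamental_theorem_of_calculus) (use d in auto)
  moreover have "F (of_real pi) = F (of_real (-pi))"
  proof -
    have "exp (\<i> * of_int k * of_real pi) = cis (of_int k * pi)" by (simp add: cis_conv_exp mult_ac)
    moreover have "exp (\<i> * of_int k * of_real (-pi)) = cis (- (of_int k * pi))" by (simp add: cis_conv_exp mult_ac)
    moreover have "cis (of_int k * pi) = cis (- (of_int k * pi))"
      by (simp add: cis.ctr sin_zero_iff_int2)
    ultimately show ?thesis unfolding F_def by simp
  qed
  ultimately show ?thesis using False by (simp add: integral_unique)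
qed

lemma ci_powi: "ci (\<lambda>z. z powi k) = (if k = 0 then 1 else 0)"
  unfolding ci_def by (simp add: cis_power_int integral_cis_int)



lemma ci_cong: "(\<And>x. h (cis x) = g (cis x)) \<Longrightarrow> ci h = ci g"
  unfolding ci_def by simp

lemma ri_cong: "(\<And>x. h (cis x) = g (cis x)) \<Longrightarrow> ri h = ri g"
  unfolding ri_def by simp

lemma cc_rot: "cc h \<Longrightarrow> cc (\<lambda>z. h (cis t * z))"
  by (rule continuous_on_compose2[where t="sphere 0 1"]) (auto intro: continuous_intros simp: norm_mult)

lemma cc_powi: "cc (\<lambda>z. z powi k)"
  by (intro continuous_intros) auto

lemma periodic_integral:
  fixes g :: "real \<Rightarrow> 'a::banach"
  assumes cont: "continuous_on UNIV g" and per: "\<And>x. g (x + 2*pi) = g x"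
    and a: "-pi \<le> a" "a \<le> pi"
  shows "integral {a..a+2*pi} g = integral {-pi..pi} g"
proof -
  have int: "g integrable_on {u..v}" for u v
    by (rule integrable_continuous_interval) (use cont continuous_on_subset in blast)
  have "integral {a..pi} g + integral {pi..a+2*pi} g = integral {a..a+2*pi} g"
    by (rule Henstock_Kurzweil_Integration.integral_combine) (use a int in auto)
  moreover have "integral {pi..a+2*pi} g = integral {-pi..a} g"
  proof -
    have "integral {-pi..a} (g \<circ> (+) (2*pi)) = integral {-pi+2*pi..a+2*pi} g"
      by (rule integral_shift_Icc_real)
    moreover have "g \<circ> (+) (2*pi) = g" using per by (auto simp: add.commute)
    ultimately show ?thesis by simp
  qed
  moreover have "integral {-pi..a} g + integral {a..pi} g = integral {-pi..pi} g"
    by (rule Henstock_Kurzweil_Integration.integral_combine) (use a int in auto)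
  ultimately show ?thesis by (simp add: add.commute)
qed

lemma ci_rot:
  assumes h: "cc h" and t: "0 \<le> t" "t \<le> 2*pi"
  shows "ci (\<lambda>z. h (cis t * z)) = ci h"
proof -
  define g where "g x = h (cis x)" for x
  have gc: "continuous_on UNIV g" unfolding g_def by (rule cc_cont[OF h])
  have gp: "g (x + 2*pi) = g x" for x unfolding g_def by (simp add: cis.ctr)
  have "integral {-pi..pi} (\<lambda>x. h (cis t * cis x)) = integral {-pi..pi} (g \<circ> (+) t)"
    by (simp add: g_def cis_mult o_def)
  also have "\<dots> = integral {-pi+t..pi+t} g" by (rule integral_shift_Icc_real)
  also have "\<dots> = integral {(t-pi)..(t-pi)+2*pi} g" by (simp add: algebra_simps)
  also have "\<dots> = integral {-pi..pi} g" by (rule periodic_integral[OF gc gp]) (use t in auto)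
  finally show ?thesis unfolding ci_def g_def by simp
qed

lemma ci_bound:
  assumes h: "cc h" and B: "\<And>z. z \<in> sphere 0 1 \<Longrightarrow> norm (h z) \<le> B"
  shows "norm (ci h) \<le> B"
proof -
  have "norm (integral {-pi..pi} (\<lambda>x. h (cis x))) \<le> integral {-pi..pi} (\<lambda>x. B)"
    by (rule integral_norm_bound_integral) (use cc_int[OF h] B in auto)
  then have "norm (integral {-pi..pi} (\<lambda>x. h (cis x))) \<le> 2*pi*B" by simp
  then show ?thesis unfolding ci_def by (simp add: norm_divide field_simps)
qed

abbreviation FC where "FC \<equiv> fourier_coeff"

lemma cc_fc_int: "cc h \<Longrightarrow> cc (\<lambda>z. h z * z powi k)"
  by (intro continuous_intros) auto

lemma fc_add: "cc h \<Longrightarrow> cc g \<Longrightarrow> FC (\<lambda>z. h z + g z) m = FC h m + FC g m"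
  unfolding fc_ci by (simp add: distrib_right ci_add cc_fc_int)

lemma fc_diff: "cc h \<Longrightarrow> cc g \<Longrightarrow> FC (\<lambda>z. h z - g z) m = FC h m - FC g m"
  unfolding fc_ci by (simp add: left_diff_distrib ci_diff cc_fc_int)

lemma fc_cmult: "FC (\<lambda>z. c * h z) m = c * FC h m"
  unfolding fc_ci by (simp add: ci_cmult mult.assoc)

lemma fc_sum: "finite I \<Longrightarrow> (\<And>i. i \<in> I \<Longrightarrow> cc (f i)) \<Longrightarrow>
    FC (\<lambda>z. \<Sum>i\<in>I. f i z) m = (\<Sum>i\<in>I. FC (f i) m)"
  unfolding fc_ci by (simp add: sum_distrib_right ci_sum cc_fc_int)

lemma fc_cnj: "FC (\<lambda>z. cnj (h z)) m = cnj (FC h (-m))"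
proof -
  have "FC (\<lambda>z. cnj (h z)) m = ci (\<lambda>z. cnj (h z * z powi m))"
    unfolding fc_ci by (rule ci_cong) (simp add: cis_power_int cis_cnj)
  also have "\<dots> = cnj (ci (\<lambda>z. h z * z powi m))" by (rule ci_cnj)
  finally show ?thesis by (simp add: fc_ci)
qed

lemma fc_shift: "FC (\<lambda>z. z powi j * h z) m = FC h (m - j)"
  unfolding fc_ci by (rule ci_cong) (simp add: cis_power_int cis_mult algebra_simps)

lemma fc_powi: "FC (\<lambda>z. z powi j) m = (if m = j then 1 else 0)"
proof -
  have "FC (\<lambda>z. z powi j) m = ci (\<lambda>z. z powi (j - m))"
    unfolding fc_ci by (rule ci_cong) (simp add: cis_power_int cis_mult algebra_simps)
  then show ?thesis by (simp add: ci_powi)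
qed

lemma fc_const: "FC (\<lambda>z. c) m = (if m = 0 then c else 0)"
  using fc_powi[of 0 m] fc_cmult[of c "\<lambda>z. z powi 0" m] by simp

lemma fc_rot:
  assumes h: "cc h" and t: "0 \<le> t" "t \<le> 2*pi"
  shows "FC (\<lambda>z. h (cis t * z)) m = cis (of_int m * t) * FC h m"
proof -
  define g where "g w = cis (of_int m * t) * (h w * w powi (-m))" for w
  have "FC (\<lambda>z. h (cis t * z)) m = ci (\<lambda>z. g (cis t * z))"
    unfolding fc_ci g_def by (rule ci_cong) (simp add: cis_power_int cis_mult algebra_simps)
  also have "\<dots> = ci g" by (rule ci_rot[OF _ t]) (unfold g_def, intro continuous_intros h, auto)
  also have "\<dots> = cis (of_int m * t) * FC h m" unfolding g_def fc_ci by (simp add: ci_cmult)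
  finally show ?thesis .
qed

lemma fc_bound:
  assumes h: "cc h" and B: "\<And>z. z \<in> sphere 0 1 \<Longrightarrow> norm (h z) \<le> B"
  shows "norm (FC h m) \<le> B"
  unfolding fc_ci
  by (rule ci_bound[OF cc_fc_int[OF h]]) (auto simp: norm_mult norm_power_int B)



definition tp :: "nat \<Rightarrow> (int \<Rightarrow> complex) \<Rightarrow> complex \<Rightarrow> complex" where
  "tp D a z = (\<Sum>j\<in>{-int D..int D}. a j * z powi j)"

definition good :: "nat \<Rightarrow> (int \<Rightarrow> complex) \<Rightarrow> bool" where
  "good D a \<longleftrightarrow> (\<forall>j. int D < \<bar>j\<bar> \<longrightarrow> a j = 0)"

definition istp :: "(complex \<Rightarrow> complex) \<Rightarrow> bool" where
  "istp P \<longleftrightarrow> (\<exists>D a. good D a \<and> (\<forall>z\<in>sphere 0 1. P z = tp D a z))"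

lemma cc_tp: "cc (tp D a)"
  unfolding tp_def by (intro continuous_intros) auto

lemma tp_ext:
  assumes "good D a" "D \<le> E"
  shows "tp E a z = tp D a z"
  unfolding tp_def
  by (rule sum.mono_neutral_right) (use assms in \<open>auto simp: good_def\<close>)

lemma istp_const: "istp (\<lambda>z. c)"
  unfolding istp_def
  by (rule exI[of _ 0], rule exI[of _ "\<lambda>j. if j = 0 then c else 0"]) (auto simp: good_def tp_def)

lemma istp_mono: "istp (\<lambda>z. c * z powi k)"
proof -
  have "(\<Sum>j\<in>{-int (nat \<bar>k\<bar>)..int (nat \<bar>k\<bar>)}. (if j = k then c else 0) * z powi j)
     = (\<Sum>j\<in>{-int (nat \<bar>k\<bar>)..int (nat \<bar>k\<bar>)}. if j = k then c * z powi k else 0)" for z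
    by (rule sum.cong) auto
  also have "\<dots> z = c * z powi k" for z by (simp add: abs_if)
  finally show ?thesis
    unfolding istp_def
    by (intro exI[of _ "nat \<bar>k\<bar>"] exI[of _ "\<lambda>j. if j = k then c else 0"]) (auto simp: good_def tp_def)
qed

lemma istp_add:
  assumes "istp P" "istp Q" shows "istp (\<lambda>z. P z + Q z)"
proof -
  obtain D a where a: "good D a" "\<forall>z\<in>sphere 0 1. P z = tp D a z" using assms(1) istp_def by auto
  obtain E b where b: "good E b" "\<forall>z\<in>sphere 0 1. Q z = tp E b z" using assms(2) istp_def by auto
  have g: "good (max D E) (\<lambda>j. a j + b j)" using a(1) b(1) by (auto simp: good_def)
  have "P z + Q z = tp (max D E) (\<lambda>j. a j + b j) z" if "z \<in> sphere 0 1" for z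
  proof -
    have "P z + Q z = tp (max D E) a z + tp (max D E) b z"
      using a b that tp_ext[of D a "max D E"] tp_ext[of E b "max D E"] by auto
    also have "\<dots> = tp (max D E) (\<lambda>j. a j + b j) z"
      unfolding tp_def by (simp add: sum.distrib distrib_right)
    finally show ?thesis .
  qed
  then show ?thesis unfolding istp_def using g by blast
qed

lemma istp_cmult:
  assumes "istp P" shows "istp (\<lambda>z. c * P z)"
proof -
  obtain D a where a: "good D a" "\<forall>z\<in>sphere 0 1. P z = tp D a z" using assms(1) istp_def by auto
  have "good D (\<lambda>j. c * a j)" using a(1) by (auto simp: good_def)
  moreover have "\<forall>z\<in>sphere 0 1. c * P z = tp D (\<lambda>j. c * a j) z"
    using a(2) by (auto simp: tp_def sum_distrib_left mult.assoc)
  ultimately show ?thesis unfolding istp_def by blast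
qed

lemma istp_sum:
  assumes "finite I" "\<And>i. i \<in> I \<Longrightarrow> istp (P i)" shows "istp (\<lambda>z. \<Sum>i\<in>I. P i z)"
  using assms
proof (induction I rule: finite_induct)
  case empty then show ?case using istp_const[of 0] by simp
next
  case (insert x F) then show ?case by (simp add: istp_add)
qed

lemma istp_cong: "istp P \<Longrightarrow> (\<And>z. z \<in> sphere 0 1 \<Longrightarrow> P z = Q z) \<Longrightarrow> istp Q"
  unfolding istp_def by auto

lemma istp_tp: "good D a \<Longrightarrow> istp (tp D a)"
  unfolding istp_def by blast

lemma istp_tp': "istp (tp D a)"
proof -
  have "istp (\<lambda>z. \<Sum>j\<in>{-int D..int D}. a j * z powi j)"
    by (intro istp_sum istp_mono) auto
  then show ?thesis unfolding tp_def by simp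
qed

lemma istp_mult:
  assumes "istp P" "istp Q" shows "istp (\<lambda>z. P z * Q z)"
proof -
  obtain D a where a: "good D a" "\<forall>z\<in>sphere 0 1. P z = tp D a z" using assms(1) istp_def by auto
  obtain E b where b: "good E b" "\<forall>z\<in>sphere 0 1. Q z = tp E b z" using assms(2) istp_def by auto
  have "istp (\<lambda>z. \<Sum>j\<in>{-int D..int D}. \<Sum>k\<in>{-int E..int E}. (a j * b k) * z powi (j + k))"
    by (intro istp_sum istp_mono) auto
  moreover have "(\<Sum>j\<in>{-int D..int D}. \<Sum>k\<in>{-int E..int E}. (a j * b k) * z powi (j + k)) = P z * Q z"
    if "z \<in> sphere 0 1" for z
  proof -
    have z: "z \<noteq> 0" using that by auto
    have "P z * Q z = (\<Sum>j\<in>{-int D..int D}. a j * z powi j) * (\<Sum>k\<in>{-int E..int E}. b k * z powi k)"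
      using a b that by (simp add: tp_def)
    also have "\<dots> = (\<Sum>j\<in>{-int D..int D}. \<Sum>k\<in>{-int E..int E}. (a j * b k) * z powi (j + k))"
      by (simp add: sum_product power_int_add[OF disjI1[OF z]] mult_ac)
    finally show ?thesis by simp
  qed
  ultimately show ?thesis by (rule istp_cong)
qed

lemma istp_cnj_id: "istp (\<lambda>z. cnj z)"
proof -
  have "istp (\<lambda>z. 1 * z powi (-1))" by (rule istp_mono)
  moreover have "1 * z powi (-1) = cnj z" if "z \<in> sphere 0 1" for z
  proof -
    have "z * cnj z = 1" using that complex_norm_square[of z] by simp
    then have "inverse z = cnj z" by (rule inverse_unique)
    then show ?thesis by (simp add: power_int_minus)
  qed
  ultimately show ?thesis by (rule istp_cong)
qed

lemma istp_id: "istp (\<lambda>z. z)"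
  using istp_mono[of 1 1] by simp

lemma istp_linear:
  assumes "bounded_linear g"
  shows "istp (\<lambda>z. complex_of_real (g z))"
proof -
  interpret linear g using assms bounded_linear.linear by blast
  have e: "g z = Re z * g 1 + Im z * g \<i>" for z
  proof -
    have "z = Re z *\<^sub>R 1 + Im z *\<^sub>R \<i>" by (simp add: complex_eq_iff)
    then have "g z = g (Re z *\<^sub>R 1 + Im z *\<^sub>R \<i>)" by simp
    then show ?thesis by (simp add: add scale)
  qed
  define u where "u = complex_of_real (g 1)"
  define v where "v = complex_of_real (g \<i>)"
  have "istp (\<lambda>z. (u/2) * z + (u/2) * cnj z + (v/(2*\<i>)) * z + (-(v/(2*\<i>))) * cnj z)"
    by (intro istp_add istp_cmult istp_id istp_cnj_id)
  then show ?thesis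
  proof (rule istp_cong)
    fix z :: complex
    have 1: "z + cnj z = 2 * complex_of_real (Re z)" and 2: "z - cnj z = 2 * \<i> * complex_of_real (Im z)"
      by (simp_all add: complex_eq_iff)
    have "(u/2) * z + (u/2) * cnj z + (v/(2*\<i>)) * z + (-(v/(2*\<i>))) * cnj z
        = (u/2) * (z + cnj z) + (v/(2*\<i>)) * (z - cnj z)" by (simp only: ring_distribs) simp
    also have "\<dots> = u * complex_of_real (Re z) + v * complex_of_real (Im z)" by (simp add: 1 2 algebra_simps)
    also have "\<dots> = complex_of_real (g z)" unfolding u_def v_def by (subst e[of z]) simp
    finally show "(u/2) * z + (u/2) * cnj z + (v/(2*\<i>)) * z + (-(v/(2*\<i>))) * cnj z = complex_of_real (g z)" .
  qed
qed

lemma istp_rpf: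
  assumes "real_polynomial_function g" shows "istp (\<lambda>z. complex_of_real (g z))"
  using assms
proof (induction rule: real_polynomial_function.induct)
  case (linear f) then show ?case by (rule istp_linear)
next
  case (const c) then show ?case by (rule istp_const)
next
  case (add f g) then show ?case by (simp add: istp_add)
next
  case (mult f g) then show ?case by (simp add: istp_mult)
qed

lemma tp_approx:
  assumes h: "cc h" and e: "e > 0"
  shows "\<exists>D a. good D a \<and> (\<forall>z\<in>sphere 0 1. norm (h z - tp D a z) \<le> e)"
proof -
  have cRe: "continuous_on (sphere 0 1) (\<lambda>z. Re (h z))" and cIm: "continuous_on (sphere 0 1) (\<lambda>z. Im (h z))"
    using h by (auto intro: continuous_intros)
  obtain g1 where g1: "real_polynomial_function g1" "\<And>z. z \<in> sphere 0 1 \<Longrightarrow> \<bar>Re (h z) - g1 z\<bar> < e/2"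
    using Stone_Weierstrass_real_polynomial_function[OF compact_sphere cRe, of "e/2"] e by auto
  obtain g2 where g2: "real_polynomial_function g2" "\<And>z. z \<in> sphere 0 1 \<Longrightarrow> \<bar>Im (h z) - g2 z\<bar> < e/2"
    using Stone_Weierstrass_real_polynomial_function[OF compact_sphere cIm, of "e/2"] e by auto
  have "istp (\<lambda>z. complex_of_real (g1 z) + \<i> * complex_of_real (g2 z))"
    by (intro istp_add istp_cmult istp_rpf g1 g2)
  then obtain D a where a: "good D a" "\<forall>z\<in>sphere 0 1. complex_of_real (g1 z) + \<i> * complex_of_real (g2 z) = tp D a z"
    unfolding istp_def by blast
  have "norm (h z - tp D a z) \<le> e" if z: "z \<in> sphere 0 1" for z
  proof -
    have "h z - tp D a z = complex_of_real (Re (h z) - g1 z) + \<i> * complex_of_real (Im (h z) - g2 z)"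
      using a(2) z by (simp add: complex_eq_iff)
    also have "norm \<dots> \<le> \<bar>Re (h z) - g1 z\<bar> + \<bar>Im (h z) - g2 z\<bar>"
      by (rule order_trans[OF norm_triangle_ineq]) (simp add: norm_mult del: of_real_diff)
    also have "\<dots> \<le> e" using g1(2)[OF z] g2(2)[OF z] by simp
    finally show ?thesis .
  qed
  with a(1) show ?thesis by blast
qed



definition NS :: "(complex \<Rightarrow> complex) \<Rightarrow> real" where
  "NS h = ri (\<lambda>z. (cmod (h z))^2)"

lemma cc_nsq: "cc h \<Longrightarrow> cc (\<lambda>z. (cmod (h z))^2)"
  by (intro continuous_intros)

lemma ns_ci: assumes h: "cc h" shows "complex_of_real (NS h) = ci (\<lambda>z. h z * cnj (h z))"
proof -
  have "complex_of_real (ri (\<lambda>z. (cmod (h z))^2)) = ci (\<lambda>z. complex_of_real ((cmod (h z))^2))"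
    by (rule ci_real[OF cc_nsq[OF h], symmetric])
  also have "\<dots> = ci (\<lambda>z. h z * cnj (h z))" by (rule ci_cong) (rule complex_norm_square)
  finally show ?thesis unfolding NS_def .
qed

lemma ns_nonneg: "cc h \<Longrightarrow> 0 \<le> NS h"
  unfolding NS_def using ri_mono[of "\<lambda>z. 0" "\<lambda>z. (cmod (h z))^2"] cc_nsq[of h]
  by (simp add: ri_const)

lemma ns_bound: "cc h \<Longrightarrow> (\<And>z. z \<in> sphere 0 1 \<Longrightarrow> cmod (h z) \<le> e) \<Longrightarrow> NS h \<le> e^2"
  unfolding NS_def using ri_mono[of "\<lambda>z. (cmod (h z))^2" "\<lambda>z. e^2"] cc_nsq[of h]
  by (simp add: ri_const power_mono)

lemma fc_tp: "FC (tp D a) m = (if m \<in> {-int D..int D} then a m else 0)"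
proof -
  have "FC (tp D a) m = (\<Sum>j\<in>{-int D..int D}. FC (\<lambda>z. a j * z powi j) m)"
    unfolding tp_def by (rule fc_sum) (auto intro!: continuous_intros)
  also have "\<dots> = (\<Sum>j\<in>{-int D..int D}. if j = m then a j else 0)"
    by (rule sum.cong) (auto simp: fc_cmult fc_powi)
  also have "\<dots> = (if m \<in> {-int D..int D} then a m else 0)" by simp
  finally show ?thesis .
qed

lemma fc_tp_good: "good D a \<Longrightarrow> FC (tp D a) m = a m"
  by (auto simp: fc_tp good_def)

lemma cns: "(complex_of_real (cmod w))^2 = w * cnj w"
  by (metis complex_norm_square of_real_power)

lemma ci_h_cnj_tp:
  assumes h: "cc h"
  shows "ci (\<lambda>z. h z * cnj (tp D a z)) = (\<Sum>j\<in>{-int D..int D}. cnj (a j) * FC h j)"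
proof -
  have "ci (\<lambda>z. h z * cnj (tp D a z)) = ci (\<lambda>z. \<Sum>j\<in>{-int D..int D}. cnj (a j) * (h z * z powi (-j)))"
    by (rule ci_cong) (simp add: tp_def sum_distrib_left cis_power_int cis_cnj mult_ac)
  also have "\<dots> = (\<Sum>j\<in>{-int D..int D}. cnj (a j) * FC h j)"
    by (subst ci_sum) (auto intro!: continuous_intros h simp: ci_cmult fc_ci)
  finally show ?thesis .
qed

lemma expand:
  assumes h: "cc h"
  shows "NS (\<lambda>z. h z - tp D a z) = NS h - (\<Sum>m\<in>{-int D..int D}. (cmod (FC h m))^2)
            + (\<Sum>m\<in>{-int D..int D}. (cmod (FC h m - a m))^2)"
proof -
  let ?I = "{-int D..int D}"
  let ?P = "tp D a"
  define S where "S = (\<Sum>j\<in>?I. cnj (a j) * FC h j)"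
  have cP: "cc ?P" by (rule cc_tp)
  have A1: "ci (\<lambda>z. h z * cnj (?P z)) = S" unfolding S_def by (rule ci_h_cnj_tp[OF h])
  have A2: "ci (\<lambda>z. ?P z * cnj (h z)) = cnj S"
  proof -
    have "ci (\<lambda>z. ?P z * cnj (h z)) = ci (\<lambda>z. cnj (h z * cnj (?P z)))" by (rule ci_cong) simp
    also have "\<dots> = cnj S" by (simp only: ci_cnj A1)
    finally show ?thesis .
  qed
  have A3: "ci (\<lambda>z. ?P z * cnj (?P z)) = (\<Sum>j\<in>?I. cnj (a j) * a j)"
    by (simp add: ci_h_cnj_tp[OF cP] fc_tp)
  have "complex_of_real (NS (\<lambda>z. h z - ?P z)) = ci (\<lambda>z. (h z - ?P z) * cnj (h z - ?P z))"
    by (rule ns_ci) (intro continuous_intros h cP)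
  also have "\<dots> = ci (\<lambda>z. ((h z * cnj (h z) - h z * cnj (?P z)) - ?P z * cnj (h z)) + ?P z * cnj (?P z))"
    by (rule ci_cong) (simp add: algebra_simps)
  also have "\<dots> = ci (\<lambda>z. h z * cnj (h z)) - ci (\<lambda>z. h z * cnj (?P z)) - ci (\<lambda>z. ?P z * cnj (h z)) + ci (\<lambda>z. ?P z * cnj (?P z))"
    by (subst ci_add ci_diff; (intro continuous_intros h cP)?)+ (rule refl)
  also have "\<dots> = complex_of_real (NS h) - S - cnj S + (\<Sum>j\<in>?I. cnj (a j) * a j)"
    by (simp add: ns_ci[OF h] A1 A2 A3)
  also have "\<dots> = complex_of_real (NS h) + (\<Sum>j\<in>?I. cnj (a j) * a j - cnj (a j) * FC h j - a j * cnj (FC h j))"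
    by (simp add: S_def sum_subtractf)
  also have "\<dots> = complex_of_real (NS h) + (\<Sum>j\<in>?I. (FC h j - a j) * cnj (FC h j - a j) - FC h j * cnj (FC h j))"
    by (rule arg_cong[where f="\<lambda>x. _ + x"], rule sum.cong) (auto simp: algebra_simps)
  also have "\<dots> = complex_of_real (NS h - (\<Sum>m\<in>?I. (cmod (FC h m))^2) + (\<Sum>m\<in>?I. (cmod (FC h m - a m))^2))"
    by (simp add: cns sum_subtractf)
  finally show ?thesis by (simp only: of_real_eq_iff)
qed

lemma bessel_int:
  assumes h: "cc h"
  shows "(\<Sum>m\<in>{-int D..int D}. (cmod (FC h m))^2) \<le> NS h"
  using expand[OF h, of D "FC h"] ns_nonneg[of "\<lambda>z. h z - tp D (FC h) z"] h cc_tp[of D "FC h"]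
  by (auto intro: continuous_intros)

lemma bessel:
  assumes h: "cc h" and F: "finite F"
  shows "(\<Sum>m\<in>F. (cmod (FC h m))^2) \<le> NS h"
proof -
  define D where "D = nat (Max (insert 0 (abs ` F)))"
  have "F \<subseteq> {-int D..int D}"
  proof
    fix m assume "m \<in> F"
    then have "\<bar>m\<bar> \<le> Max (insert 0 (abs ` F))" using F by (intro Max_ge) auto
    then show "m \<in> {-int D..int D}" unfolding D_def by auto
  qed
  then have "(\<Sum>m\<in>F. (cmod (FC h m))^2) \<le> (\<Sum>m\<in>{-int D..int D}. (cmod (FC h m))^2)"
    by (intro sum_mono2) auto
  also have "\<dots> \<le> NS h" by (rule bessel_int[OF h])
  finally show ?thesis .
qed

theorem parseval:
  assumes h: "cc h"
  shows "((\<lambda>m. (cmod (FC h m))^2) has_sum NS h) UNIV"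
  unfolding has_sum_def
proof (subst order_tendsto_iff, safe)
  fix u assume "NS h < u"
  then show "\<forall>\<^sub>F F in finite_subsets_at_top UNIV. sum (\<lambda>m. (cmod (FC h m))^2) F < u"
    using bessel[OF h] by (intro eventually_finite_subsets_at_top_weakI) (meson le_less_trans)
next
  fix l assume l: "l < NS h"
  define e where "e = sqrt (NS h - l) / 2"
  have e0: "e > 0" using l by (simp add: e_def)
  have e2: "e^2 < NS h - l" using l by (simp add: e_def power_divide)
  obtain D a where a: "good D a" "\<forall>z\<in>sphere 0 1. norm (h z - tp D a z) \<le> e"
    using tp_approx[OF h e0] by blast
  have "NS (\<lambda>z. h z - tp D a z) \<le> e^2"
    by (rule ns_bound) (use a h in \<open>auto intro: continuous_intros cc_tp\<close>)
  then have I: "NS h - (\<Sum>m\<in>{-int D..int D}. (cmod (FC h m))^2) \<le> e^2"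
    using expand[OF h, of D a] sum_nonneg[of "{-int D..int D}" "\<lambda>m. (cmod (FC h m - a m))^2"] by simp
  show "\<forall>\<^sub>F F in finite_subsets_at_top UNIV. l < sum (\<lambda>m. (cmod (FC h m))^2) F"
    unfolding eventually_finite_subsets_at_top
  proof (intro exI[of _ "{-int D..int D}"] conjI allI impI)
    fix Y assume Y: "finite Y \<and> {-int D..int D} \<subseteq> Y \<and> Y \<subseteq> UNIV"
    have "(\<Sum>m\<in>{-int D..int D}. (cmod (FC h m))^2) \<le> sum (\<lambda>m. (cmod (FC h m))^2) Y"
      using Y by (intro sum_mono2) auto
    then show "l < sum (\<lambda>m. (cmod (FC h m))^2) Y" using I e2 by linarith
  qed auto
qed



definition w :: "real \<Rightarrow> int \<Rightarrow> real" where
  "w t m = (cmod (cis (of_int m * t) - 1))^2"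

lemma cis_minus1_sq: "(cmod (cis x - 1))^2 = 2 - 2 * cos x"
proof -
  have "(cmod (cis x - 1))^2 = (cos x - 1)^2 + (sin x)^2"
    by (simp add: cmod_def cis.code)
  also have "\<dots> = 2 - 2 * cos x" using sin_cos_squared_add[of x] by (simp add: power2_eq_square algebra_simps)
  finally show ?thesis .
qed

lemma cis_minus1_le: "cmod (cis x - 1) \<le> \<bar>x\<bar>"
proof -
  have c: "cos x = 1 - 2 * (sin (x/2))^2" using cos_double_sin[of "x/2"] by simp
  have "(sin (x/2))^2 \<le> (x/2)^2"
    using abs_sin_x_le_abs_x[of "x/2"] by (metis abs_ge_zero power2_abs power_mono)
  then have "(cmod (cis x - 1))^2 \<le> x^2" by (simp add: cis_minus1_sq c power_divide)
  then show ?thesis by (metis abs_ge_zero power2_abs power2_le_imp_le)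
qed

lemma w_nonneg: "0 \<le> w t m" by (simp add: w_def)
lemma w_le4: "w t m \<le> 4"
  unfolding w_def cis_minus1_sq using cos_ge_minus_one[of "of_int m * t"] by linarith
lemma w_le_sq: "w t m \<le> (of_int m * t)^2"
  unfolding w_def using cis_minus1_le[of "of_int m * t"]
  by (metis abs_ge_zero norm_ge_zero power2_abs power_mono)
lemma w_zero: "w t 0 = 0" by (simp add: w_def)

definition dl :: "real \<Rightarrow> (complex \<Rightarrow> complex) \<Rightarrow> complex \<Rightarrow> complex" where
  "dl t g z = g (cis t * z) - g z"

lemma cc_dl: "cc g \<Longrightarrow> cc (dl t g)"
  unfolding dl_def by (intro continuous_intros cc_rot)

lemma fc_dl: "cc g \<Longrightarrow> 0 \<le> t \<Longrightarrow> t \<le> 2*pi \<Longrightarrow> FC (dl t g) m = (cis (of_int m * t) - 1) * FC g m"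
proof -
  assume g: "cc g" and t: "0 \<le> t" "t \<le> 2*pi"
  have "FC (dl t g) m = FC (\<lambda>z. g (cis t * z)) m - FC g m"
    unfolding dl_def by (rule fc_diff[OF cc_rot[OF g] g])
  also have "\<dots> = (cis (of_int m * t) - 1) * FC g m"
    unfolding fc_rot[OF g t] by (simp add: algebra_simps)
  finally show ?thesis .
qed

lemma parseval_dl:
  assumes "cc g" "0 \<le> t" "t \<le> 2*pi"
  shows "((\<lambda>m. w t m * (cmod (FC g m))^2) has_sum NS (dl t g)) UNIV"
  using parseval[OF cc_dl[OF assms(1), of t]] by (simp add: fc_dl assms w_def norm_mult power_mult_distrib)

lemma ns_le:
  assumes "cc g" "cc g1" "cc g2" "0 \<le> \<alpha>" "0 \<le> \<beta>"
    and "\<And>z. z \<in> sphere 0 1 \<Longrightarrow> (cmod (g z))^2 \<le> \<alpha> * (cmod (g1 z))^2 + \<beta> * (cmod (g2 z))^2"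
  shows "NS g \<le> \<alpha> * NS g1 + \<beta> * NS g2"
proof -
  have "NS g \<le> ri (\<lambda>z. \<alpha> * (cmod (g1 z))^2 + \<beta> * (cmod (g2 z))^2)"
    unfolding NS_def by (rule ri_mono) (use assms in \<open>auto intro!: continuous_intros\<close>)
  also have "\<dots> = \<alpha> * NS g1 + \<beta> * NS g2"
    by (subst ri_add) (use assms in \<open>auto intro!: continuous_intros simp: ri_cmult NS_def\<close>)
  finally show ?thesis .
qed

lemma fc_cong: "(\<And>x. h (cis x) = g (cis x)) \<Longrightarrow> FC h m = FC g m"
  unfolding fc_ci by (rule ci_cong) simp

lemma fc_cnjP:
  assumes g: "cc g"
  shows "FC (\<lambda>z. cnj (tp D a z) * g z) m = (\<Sum>j\<in>{-int D..int D}. cnj (a j) * FC g (m + j))"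
proof -
  have "FC (\<lambda>z. cnj (tp D a z) * g z) m = FC (\<lambda>z. \<Sum>j\<in>{-int D..int D}. cnj (a j) * (z powi (-j) * g z)) m"
    by (rule fc_cong) (simp add: tp_def sum_distrib_left sum_distrib_right cis_power_int cis_cnj mult_ac)
  also have "\<dots> = (\<Sum>j\<in>{-int D..int D}. cnj (a j) * FC g (m + j))"
    by (subst fc_sum) (auto intro!: continuous_intros g simp: fc_cmult fc_shift)
  finally show ?thesis .
qed

lemma fc_Pcnj:
  assumes g: "cc g"
  shows "FC (\<lambda>z. tp D a z * cnj (g z)) m = (\<Sum>j\<in>{-int D..int D}. a j * cnj (FC g (j - m)))"
proof -
  have "FC (\<lambda>z. tp D a z * cnj (g z)) m = FC (\<lambda>z. \<Sum>j\<in>{-int D..int D}. a j * (z powi j * cnj (g z))) m"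
    by (rule fc_cong) (simp add: tp_def sum_distrib_left sum_distrib_right mult_ac)
  also have "\<dots> = (\<Sum>j\<in>{-int D..int D}. a j * cnj (FC g (j - m)))"
    by (subst fc_sum) (auto intro!: continuous_intros g simp: fc_cmult fc_shift fc_cnj)
  finally show ?thesis .
qed

lemma tp_lip:
  assumes z: "z \<in> sphere 0 1" and t: "0 \<le> t"
  shows "cmod (tp D a (cis t * z) - tp D a z) \<le> (\<Sum>j\<in>{-int D..int D}. cmod (a j) * \<bar>of_int j\<bar>) * t"
proof -
  have "tp D a (cis t * z) - tp D a z = (\<Sum>j\<in>{-int D..int D}. a j * z powi j * (cis (of_int j * t) - 1))"
    by (simp add: tp_def power_int_mult_distrib cis_power_int sum_subtractf[symmetric] algebra_simps)
  also have "cmod \<dots> \<le> (\<Sum>j\<in>{-int D..int D}. cmod (a j * z powi j * (cis (of_int j * t) - 1)))"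
    by (rule norm_sum)
  also have "\<dots> \<le> (\<Sum>j\<in>{-int D..int D}. cmod (a j) * \<bar>of_int j\<bar> * t)"
  proof (rule sum_mono)
    fix j
    have "cmod (cis (of_int j * t) - 1) \<le> \<bar>of_int j\<bar> * t"
      using cis_minus1_le[of "of_int j * t"] t by (simp add: abs_mult)
    then show "cmod (a j * z powi j * (cis (of_int j * t) - 1)) \<le> cmod (a j) * \<bar>of_int j\<bar> * t"
      using z by (simp add: norm_mult norm_power_int mult.assoc mult_left_mono)
  qed
  also have "\<dots> = (\<Sum>j\<in>{-int D..int D}. cmod (a j) * \<bar>of_int j\<bar>) * t"
    by (simp add: sum_distrib_right)
  finally show ?thesis .
qed



lemma sq_tri: "(x::real) \<le> y + z \<Longrightarrow> 0 \<le> x \<Longrightarrow> 0 \<le> y \<Longrightarrow> 0 \<le> z \<Longrightarrow> x^2 \<le> 2*y^2 + 2*z^2"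
proof -
  assume "x \<le> y + z" "0 \<le> x" "0 \<le> y" "0 \<le> z"
  then have "x^2 \<le> (y+z)^2" by (simp add: power_mono)
  also have "\<dots> \<le> 2*y^2 + 2*z^2" using sum_squares_ge_zero[of "y-z" 0]
    by (simp add: power2_eq_square algebra_simps)
  finally show ?thesis .
qed

lemma cis_mult_sphere: "z \<in> sphere 0 1 \<Longrightarrow> cis t * z \<in> sphere 0 1"
  by (simp add: norm_mult)

locale Setup =
  fixes f :: "complex \<Rightarrow> complex" and D0 :: nat and a :: "int \<Rightarrow> complex"
  assumes cf: "cc f" and f1: "\<And>z. z \<in> sphere 0 1 \<Longrightarrow> cmod (f z) = 1"
    and ga: "good D0 a" and appr: "\<And>z. z \<in> sphere 0 1 \<Longrightarrow> cmod (f z - tp D0 a z) \<le> 1/16"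
begin

abbreviation "P \<equiv> tp D0 a"
definition r where "r z = f z - P z"
definition rc where "rc m = FC r m"
definition L where "L = (\<Sum>j\<in>{-int D0..int D0}. cmod (a j) * \<bar>of_int j\<bar>)"
definition A where "A = (\<Sum>j\<in>{-int D0..int D0}. cmod (a j))"
definition cph where "cph K m = (if m \<in> {-int K..-1} then rc m else 0)"
definition cps where "cps K m = (if m \<in> {1..int K} then rc m else 0)"
definition ph where "ph K = tp K (cph K)"
definition ps where "ps K = tp K (cps K)"
definition H where "H K z = cnj (P z) * ph K z + P z * cnj (ps K z)"
definition q where "q z = complex_of_real ((cmod (r z))^2)"

lemma cP: "cc P" by (rule cc_tp)
lemma cr: "cc r" unfolding r_def by (intro continuous_intros cf cP)
lemma cph: "cc (ph K)" unfolding ph_def by (rule cc_tp)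
lemma cps: "cc (ps K)" unfolding ps_def by (rule cc_tp)
lemma cq: "cc q" unfolding q_def by (intro continuous_intros cr)
lemma cH: "cc (H K)" unfolding H_def by (intro continuous_intros cP cph cps)

lemma L_nonneg: "0 \<le> L" unfolding L_def by (intro sum_nonneg) auto
lemma A_nonneg: "0 \<le> A" unfolding A_def by (intro sum_nonneg) auto

lemma r_small: "z \<in> sphere 0 1 \<Longrightarrow> cmod (r z) \<le> 1/16"
  unfolding r_def by (rule appr)

lemma P_lo: "z \<in> sphere 0 1 \<Longrightarrow> 15/16 \<le> cmod (P z)"
  using f1[of z] appr[of z] norm_triangle_ineq2[of "f z" "P z"] by simp

lemma P_hi: "z \<in> sphere 0 1 \<Longrightarrow> cmod (P z) \<le> 17/16"
  using f1[of z] appr[of z] norm_triangle_ineq3[of "f z" "P z"] by simp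

lemma P_lip: "z \<in> sphere 0 1 \<Longrightarrow> 0 \<le> t \<Longrightarrow> cmod (P (cis t * z) - P z) \<le> L * t"
  unfolding L_def by (rule tp_lip)

lemma rc_small: "cmod (rc m) \<le> 1/16"
  unfolding rc_def by (rule fc_bound[OF cr r_small])

lemma cph_small: "cmod (cph K m) \<le> 1/16" unfolding cph_def using rc_small by auto
lemma cps_small: "cmod (cps K m) \<le> 1/16" unfolding cps_def using rc_small by auto

lemma good_cph: "good K (cph K)" unfolding good_def cph_def by auto
lemma good_cps: "good K (cps K)" unfolding good_def cps_def by auto
lemma fc_ph: "FC (ph K) m = cph K m" unfolding ph_def by (rule fc_tp_good[OF good_cph])
lemma fc_ps: "FC (ps K) m = cps K m" unfolding ps_def by (rule fc_tp_good[OF good_cps])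

lemma ns_r: "NS r \<le> 1"
proof -
  have "NS r \<le> (1/16)^2" by (rule ns_bound[OF cr r_small])
  moreover have "(1/16::real)^2 \<le> 1" by (simp add: power2_eq_square)
  ultimately show ?thesis by linarith
qed

lemma ns_ph: "NS (ph K) \<le> 1"
proof -
  have "NS (ph K) \<le> NS r"
    by (rule has_sum_mono[OF parseval[OF cph] parseval[OF cr]])
       (auto simp: fc_ph cph_def rc_def)
  then show ?thesis using ns_r by simp
qed

lemma ns_ps: "NS (ps K) \<le> 1"
proof -
  have "NS (ps K) \<le> NS r"
    by (rule has_sum_mono[OF parseval[OF cps] parseval[OF cr]])
       (auto simp: fc_ps cps_def rc_def)
  then show ?thesis using ns_r by simp
qed

lemma S1:
  assumes t: "0 \<le> t"
  shows "NS (dl t (ph K)) \<le> 8 * NS (dl t (\<lambda>z. cnj (P z) * ph K z)) + (8 * L^2 * t^2) * NS (ph K)"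
proof (rule ns_le)
  show "cc (dl t (ph K))" "cc (dl t (\<lambda>z. cnj (P z) * ph K z))" "cc (ph K)"
    by (intro cc_dl continuous_intros cP cph)+
  show "0 \<le> (8::real)" "0 \<le> 8 * L^2 * t^2" by auto
  fix z :: complex assume z: "z \<in> sphere 0 1"
  define z' where "z' = cis t * z"
  have z': "z' \<in> sphere 0 1" unfolding z'_def using z by (rule cis_mult_sphere)
  define d where "d = ph K z' - ph K z"
  define du where "du = cnj (P z') * ph K z' - cnj (P z) * ph K z"
  have e: "cnj (P z') * d = du - (cnj (P z') - cnj (P z)) * ph K z"
    unfolding d_def du_def by (simp add: algebra_simps)
  have "cmod (P z') * cmod d = cmod (cnj (P z') * d)" by (simp add: norm_mult)
  also have "\<dots> \<le> cmod du + cmod (P z' - P z) * cmod (ph K z)"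
    unfolding e by (metis complex_cnj_diff complex_mod_cnj norm_mult norm_triangle_ineq4)
  also have "\<dots> \<le> cmod du + (L * t) * cmod (ph K z)"
    using P_lip[OF z t] by (simp add: z'_def mult_right_mono)
  finally have 1: "cmod (P z') * cmod d \<le> cmod du + L * t * cmod (ph K z)" .
  have "(1/2) * cmod d \<le> cmod (P z') * cmod d"
    using P_lo[OF z'] by (intro mult_right_mono) auto
  with 1 have "cmod d \<le> 2 * cmod du + 2 * (L * t * cmod (ph K z))" by linarith
  then have "(cmod d)^2 \<le> 2 * (2 * cmod du)^2 + 2 * (2 * (L * t * cmod (ph K z)))^2"
    by (rule sq_tri) (use L_nonneg t in auto)
  then show "(cmod (dl t (ph K) z))^2 \<le> 8 * (cmod (dl t (\<lambda>z. cnj (P z) * ph K z) z))^2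
        + 8 * L^2 * t^2 * (cmod (ph K z))^2"
    unfolding dl_def d_def du_def z'_def by (simp add: power_mult_distrib)
qed

lemma S2:
  "NS (dl t (\<lambda>z. cnj (P z) * ph K z)) \<le> 2 * NS (dl t (H K)) + 2 * NS (dl t (\<lambda>z. P z * cnj (ps K z)))"
proof (rule ns_le)
  show "cc (dl t (\<lambda>z. cnj (P z) * ph K z))" "cc (dl t (H K))" "cc (dl t (\<lambda>z. P z * cnj (ps K z)))"
    by (intro cc_dl continuous_intros cP cph cps cH)+
  fix z :: complex
  have "dl t (\<lambda>z. cnj (P z) * ph K z) z = dl t (H K) z - dl t (\<lambda>z. P z * cnj (ps K z)) z"
    unfolding dl_def H_def by simp
  then show "(cmod (dl t (\<lambda>z. cnj (P z) * ph K z) z))^2 \<le> 2 * (cmod (dl t (H K) z))^2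
      + 2 * (cmod (dl t (\<lambda>z. P z * cnj (ps K z)) z))^2"
    by (metis norm_ge_zero norm_triangle_ineq4 sq_tri)
qed auto

lemma S3:
  assumes t: "0 \<le> t"
  shows "NS (dl t (\<lambda>z. P z * cnj (ps K z))) \<le> 3 * NS (dl t (ps K)) + (2 * L^2 * t^2) * NS (ps K)"
proof (rule ns_le)
  show "cc (dl t (\<lambda>z. P z * cnj (ps K z)))" "cc (dl t (ps K))" "cc (ps K)"
    by (intro cc_dl continuous_intros cP cps)+
  show "0 \<le> (3::real)" "0 \<le> 2 * L^2 * t^2" by auto
  fix z :: complex assume z: "z \<in> sphere 0 1"
  define z' where "z' = cis t * z"
  have z': "z' \<in> sphere 0 1" unfolding z'_def using z by (rule cis_mult_sphere)
  define d where "d = ps K z' - ps K z"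
  have e: "P z' * cnj (ps K z') - P z * cnj (ps K z) = P z' * cnj d + (P z' - P z) * cnj (ps K z)"
    unfolding d_def by (simp add: algebra_simps)
  have "cmod (P z' * cnj (ps K z') - P z * cnj (ps K z)) \<le> cmod (P z') * cmod d + cmod (P z' - P z) * cmod (ps K z)"
    unfolding e by (metis complex_mod_cnj norm_mult norm_triangle_ineq)
  also have "\<dots> \<le> (17/16) * cmod d + (L * t) * cmod (ps K z)"
    using P_lip[OF z t] P_hi[OF z'] by (intro add_mono mult_right_mono) (auto simp: z'_def)
  finally have "(cmod (P z' * cnj (ps K z') - P z * cnj (ps K z)))^2 \<le> 2 * ((17/16) * cmod d)^2 + 2 * ((L * t) * cmod (ps K z))^2"
    by (rule sq_tri) (use L_nonneg t in auto)
  also have "\<dots> \<le> 3 * (cmod d)^2 + 2 * L^2 * t^2 * (cmod (ps K z))^2"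
  proof -
    have "2 * ((17/16) * cmod d)^2 = (578/256) * (cmod d)^2" by (simp add: power2_eq_square)
    moreover have "2 * ((L*t) * cmod (ps K z))^2 = 2 * L^2 * t^2 * (cmod (ps K z))^2"
      by (simp add: power_mult_distrib)
    moreover have "0 \<le> (cmod d)^2" by simp
    ultimately show ?thesis by linarith
  qed
  finally show "(cmod (dl t (\<lambda>z. P z * cnj (ps K z)) z))^2 \<le> 3 * (cmod (dl t (ps K) z))^2
        + 2 * L^2 * t^2 * (cmod (ps K z))^2"
    unfolding dl_def d_def z'_def .
qed

lemma S5: "NS (dl t q) \<le> (1/64) * NS (dl t r) + 0 * NS r"
proof (rule ns_le)
  show "cc (dl t q)" "cc (dl t r)" "cc r" by (intro cc_dl cq cr)+
  fix z :: complex assume z: "z \<in> sphere 0 1"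
  define z' where "z' = cis t * z"
  have z': "z' \<in> sphere 0 1" unfolding z'_def using z by (rule cis_mult_sphere)
  have "cmod (q z' - q z) = \<bar>(cmod (r z'))^2 - (cmod (r z))^2\<bar>"
    unfolding q_def by (metis norm_of_real of_real_diff)
  also have "\<dots> = (cmod (r z') + cmod (r z)) * \<bar>cmod (r z') - cmod (r z)\<bar>"
  proof -
    have "(cmod (r z'))^2 - (cmod (r z))^2 = (cmod (r z') + cmod (r z)) * (cmod (r z') - cmod (r z))"
      by (simp add: power2_eq_square algebra_simps)
    then show ?thesis by (simp add: abs_mult)
  qed
  also have "\<dots> \<le> (1/8) * cmod (r z' - r z)"
  proof (rule mult_mono)
    show "cmod (r z') + cmod (r z) \<le> 1/8" using r_small[OF z] r_small[OF z'] by simp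
    show "\<bar>cmod (r z') - cmod (r z)\<bar> \<le> cmod (r z' - r z)" by (rule norm_triangle_ineq3)
  qed auto
  finally have "cmod (q z' - q z) \<le> (1/8) * cmod (r z' - r z)" .
  then have pm: "(cmod (q z' - q z))^2 \<le> ((1/8) * cmod (r z' - r z))^2" by (rule power_mono) simp
  have sq: "((1/8) * cmod (r z' - r z))^2 = (1/64) * (cmod (r z' - r z))^2"
    by (simp add: power_mult_distrib power2_eq_square)
  show "(cmod (dl t q z))^2 \<le> 1/64 * (cmod (dl t r z))^2 + 0 * (cmod (r z))^2"
    unfolding dl_def z'_def[symmetric] using pm sq by linarith
qed auto

end


context Setup begin

abbreviation "I0 \<equiv> {-int D0..int D0}"

lemma fc_H: "FC (H K) m = (\<Sum>j\<in>I0. cnj (a j) * cph K (m + j)) + (\<Sum>j\<in>I0. a j * cnj (cps K (j - m)))"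
proof -
  have "FC (H K) m = FC (\<lambda>z. cnj (P z) * ph K z) m + FC (\<lambda>z. P z * cnj (ps K z)) m"
    unfolding H_def by (rule fc_add) (intro continuous_intros cP cph cps)+
  then show ?thesis by (simp add: fc_cnjP[OF cph] fc_Pcnj[OF cps] fc_ph fc_ps)
qed

lemma H_ident:
  assumes z: "z \<in> sphere 0 1"
  shows "H K z = ((1 - P z * cnj (P z)) - q z) - cnj (P z) * (r z - ph K z) - P z * cnj (r z - ps K z)"
proof -
  have fz: "f z = P z + r z" by (simp add: r_def)
  have "(P z + r z) * cnj (P z + r z) = 1"
    using f1[OF z] complex_norm_square[of "f z"] fz by simp
  moreover have "q z = r z * cnj (r z)" unfolding q_def by (rule complex_norm_square)
  moreover have "((1 - P z * cnj (P z)) - r z * cnj (r z)) - cnj (P z) * (r z - ph K z) - P z * cnj (r z - ps K z)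
     = H K z + (1 - (P z + r z) * cnj (P z + r z))"
    unfolding H_def by (simp add: algebra_simps)
  ultimately show ?thesis by simp
qed

definition W where "W K = {-int K + int D0 .. -2*int D0 - 1}"
definition Lo where "Lo = {-2*int D0 .. int D0}"
definition Hi where "Hi K = {-int K - int D0 .. -int K + int D0 - 1}"

lemma H_W:
  assumes m: "m \<in> W K"
  shows "FC (H K) m = - FC q m"
proof -
  have m1: "-int K + int D0 \<le> m" "m \<le> -2*int D0 - 1" using m by (auto simp: W_def)
  have c1: "cc (\<lambda>z. 1 - P z * cnj (P z))" by (intro continuous_intros cP)
  have c2: "cc (\<lambda>z. cnj (P z) * (r z - ph K z))" by (intro continuous_intros cP cr cph)
  have c3: "cc (\<lambda>z. P z * cnj (r z - ps K z))" by (intro continuous_intros cP cr cps)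
  have "FC (H K) m = FC (\<lambda>z. ((1 - P z * cnj (P z)) - q z) - cnj (P z) * (r z - ph K z) - P z * cnj (r z - ps K z)) m"
    by (rule fc_cong) (rule H_ident, simp)
  also have "\<dots> = FC (\<lambda>z. ((1 - P z * cnj (P z)) - q z) - cnj (P z) * (r z - ph K z)) m - FC (\<lambda>z. P z * cnj (r z - ps K z)) m"
    by (rule fc_diff) (intro continuous_intros cP cr cph cps cq)+
  also have "FC (\<lambda>z. ((1 - P z * cnj (P z)) - q z) - cnj (P z) * (r z - ph K z)) m
     = FC (\<lambda>z. (1 - P z * cnj (P z)) - q z) m - FC (\<lambda>z. cnj (P z) * (r z - ph K z)) m"
    by (rule fc_diff) (intro continuous_intros cP cr cph cps cq)+
  also have "FC (\<lambda>z. (1 - P z * cnj (P z)) - q z) m = FC (\<lambda>z. 1 - P z * cnj (P z)) m - FC q m"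
    by (rule fc_diff) (intro continuous_intros cP cr cph cps cq)+
  also have "FC (\<lambda>z. 1 - P z * cnj (P z)) m = FC (\<lambda>z. 1) m - FC (\<lambda>z. P z * cnj (P z)) m"
    by (rule fc_diff) (intro continuous_intros cP cr cph cps cq)+
  also have "FC (\<lambda>z. 1) m = 0" using m1 by (simp add: fc_const)
  also have "FC (\<lambda>z. P z * cnj (P z)) m = 0"
  proof -
    have "FC (\<lambda>z. P z * cnj (P z)) m = (\<Sum>j\<in>I0. a j * cnj (a (j - m)))"
      by (simp add: fc_Pcnj[OF cP] fc_tp_good[OF ga])
    also have "\<dots> = 0"
      by (rule sum.neutral) (use ga m1 in \<open>auto simp: good_def\<close>)
    finally show ?thesis .
  qed
  also have "FC (\<lambda>z. cnj (P z) * (r z - ph K z)) m = 0"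
  proof -
    have "FC (\<lambda>z. cnj (P z) * (r z - ph K z)) m = (\<Sum>j\<in>I0. cnj (a j) * (rc (m + j) - cph K (m + j)))"
      by (simp add: fc_cnjP fc_diff cr cph rc_def fc_ph continuous_intros)
    also have "\<dots> = 0"
      by (rule sum.neutral) (use m1 in \<open>auto simp: cph_def\<close>)
    finally show ?thesis .
  qed
  also have "FC (\<lambda>z. P z * cnj (r z - ps K z)) m = 0"
  proof -
    have "FC (\<lambda>z. P z * cnj (r z - ps K z)) m = (\<Sum>j\<in>I0. a j * cnj (FC (\<lambda>z. r z - ps K z) (j - m)))"
      by (rule fc_Pcnj) (intro continuous_intros cr cps)
    also have "\<dots> = (\<Sum>j\<in>I0. a j * cnj (rc (j - m) - cps K (j - m)))"
      by (simp only: fc_diff[OF cr cps] rc_def fc_ps)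
    finally have "FC (\<lambda>z. P z * cnj (r z - ps K z)) m = (\<Sum>j\<in>I0. a j * cnj (rc (j - m) - cps K (j - m)))" .
    also have "\<dots> = 0"
      by (rule sum.neutral) (use m1 in \<open>auto simp: cps_def\<close>)
    finally show ?thesis .
  qed
  finally show ?thesis by simp
qed

lemma H_supp:
  assumes m: "m \<notin> {-int K - int D0..int D0}"
  shows "FC (H K) m = 0"
  unfolding fc_H
  by (rule add_eq_0_iff2[THEN iffD2, OF _] ; (rule sum.neutral)?)
     (use m in \<open>auto simp: cph_def cps_def\<close>)

lemma H_bnd:
  assumes B: "\<And>j. j \<in> I0 \<Longrightarrow> cmod (cph K (m + j)) \<le> B \<and> cmod (cps K (j - m)) \<le> B"
  shows "cmod (FC (H K) m) \<le> 2 * A * B"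
proof -
  have "cmod (FC (H K) m) \<le> cmod (\<Sum>j\<in>I0. cnj (a j) * cph K (m + j)) + cmod (\<Sum>j\<in>I0. a j * cnj (cps K (j - m)))"
    unfolding fc_H by (rule norm_triangle_ineq)
  also have "\<dots> \<le> (\<Sum>j\<in>I0. cmod (a j) * B) + (\<Sum>j\<in>I0. cmod (a j) * B)"
  proof (rule add_mono)
    show "cmod (\<Sum>j\<in>I0. cnj (a j) * cph K (m + j)) \<le> (\<Sum>j\<in>I0. cmod (a j) * B)"
      by (rule order_trans[OF norm_sum], rule sum_mono) (use B in \<open>auto simp: norm_mult intro: mult_left_mono\<close>)
    show "cmod (\<Sum>j\<in>I0. a j * cnj (cps K (j - m))) \<le> (\<Sum>j\<in>I0. cmod (a j) * B)"
      by (rule order_trans[OF norm_sum], rule sum_mono) (use B in \<open>auto simp: norm_mult intro: mult_left_mono\<close>)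
  qed
  also have "\<dots> = 2 * A * B" by (simp add: A_def sum_distrib_right)
  finally show ?thesis .
qed

definition Clo where "Clo = real (3*D0+1) * (4 * (real D0)^2) * (A/8)^2"
definition Chi where "Chi = 32 * real D0 * A^2"

lemma Clo_nonneg: "0 \<le> Clo" unfolding Clo_def by simp
lemma Chi_nonneg: "0 \<le> Chi" unfolding Chi_def by simp

lemma S4:
  assumes t: "0 \<le> t" "t \<le> 2*pi" and K: "3*D0+1 \<le> K" and eta: "0 \<le> \<eta>"
    and dec: "\<And>m. int K - 2*int D0 \<le> \<bar>m\<bar> \<Longrightarrow> cmod (rc m) \<le> \<eta>"
  shows "NS (dl t (H K)) \<le> NS (dl t q) + Clo * t^2 + Chi * \<eta>^2"
proof -
  define g where "g m = w t m * (cmod (FC (H K) m))^2" for m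
  define U where "U = {-int K - int D0..int D0}"
  have hs: "(g has_sum NS (dl t (H K))) UNIV"
    unfolding g_def by (rule parseval_dl[OF cH t])
  have "(g has_sum sum g U) UNIV"
    by (rule has_sum_finite_neutralI) (auto simp: U_def g_def H_supp)
  then have eq: "NS (dl t (H K)) = sum g U" using hs has_sum_unique by blast
  have U: "U = Hi K \<union> W K \<union> Lo" using K by (auto simp: U_def Hi_def W_def Lo_def)
  have d1: "Hi K \<inter> W K = {}" "(Hi K \<union> W K) \<inter> Lo = {}" using K by (auto simp: Hi_def W_def Lo_def)
  have "sum g U = sum g (Hi K \<union> W K) + sum g Lo"
    unfolding U by (rule sum.union_disjoint) (use d1 in \<open>auto simp: Hi_def W_def Lo_def\<close>)
  also have "sum g (Hi K \<union> W K) = sum g (Hi K) + sum g (W K)"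
    by (rule sum.union_disjoint) (use d1 in \<open>auto simp: Hi_def W_def Lo_def\<close>)
  finally have "sum g U = sum g (Hi K) + sum g (W K) + sum g Lo" .
  moreover have "sum g (W K) \<le> NS (dl t q)"
  proof -
    have "sum g (W K) = (\<Sum>m\<in>W K. w t m * (cmod (FC q m))^2)"
      by (rule sum.cong) (auto simp: g_def H_W)
    also have "\<dots> \<le> NS (dl t q)"
      by (rule finite_sum_le_has_sum[OF parseval_dl[OF cq t]]) (auto simp: W_def w_nonneg)
    finally show ?thesis .
  qed
  moreover have "sum g Lo \<le> Clo * t^2"
  proof -
    have "sum g Lo \<le> (\<Sum>m\<in>Lo. (4 * (real D0)^2 * t^2) * (A/8)^2)"
    proof (rule sum_mono)
      fix m assume m: "m \<in> Lo"
      have "w t m \<le> (of_int m * t)^2" by (rule w_le_sq)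
      also have "\<dots> = (of_int \<bar>m\<bar>)^2 * t^2" by (simp add: power_mult_distrib)
      also have "\<dots> \<le> (2 * real D0)^2 * t^2"
        using m by (intro mult_right_mono power_mono) (auto simp: Lo_def)
      finally have w1: "w t m \<le> 4 * (real D0)^2 * t^2" by (simp add: power_mult_distrib)
      have "cmod (FC (H K) m) \<le> 2 * A * (1/16)"
        by (rule H_bnd) (rule conjI[OF cph_small cps_small])
      then have "(cmod (FC (H K) m))^2 \<le> (A/8)^2" by (intro power_mono) auto
      then show "g m \<le> (4 * (real D0)^2 * t^2) * (A/8)^2"
        unfolding g_def using w1 by (intro mult_mono) (auto simp: w_nonneg)
    qed
    also have "\<dots> = Clo * t^2" by (simp add: Lo_def Clo_def)
    finally show ?thesis .
  qed
  moreover have "sum g (Hi K) \<le> Chi * \<eta>^2"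
  proof -
    have "sum g (Hi K) \<le> (\<Sum>m\<in>Hi K. 4 * (2 * A * \<eta>)^2)"
    proof (rule sum_mono)
      fix m assume m: "m \<in> Hi K"
      have "cmod (FC (H K) m) \<le> 2 * A * \<eta>"
      proof (rule H_bnd, intro conjI)
        fix j assume j: "j \<in> I0"
        show "cmod (cph K (m + j)) \<le> \<eta>"
          using m j eta by (auto simp: cph_def Hi_def intro!: dec)
        show "cmod (cps K (j - m)) \<le> \<eta>"
          using m j eta by (auto simp: cps_def Hi_def intro!: dec)
      qed
      then have "(cmod (FC (H K) m))^2 \<le> (2 * A * \<eta>)^2" by (intro power_mono) auto
      then show "g m \<le> 4 * (2 * A * \<eta>)^2"
        unfolding g_def using w_le4[of t m] by (intro mult_mono) (auto simp: w_nonneg)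
    qed
    also have "\<dots> = Chi * \<eta>^2" by (simp add: Hi_def Chi_def power_mult_distrib)
    finally show ?thesis .
  qed
  ultimately show ?thesis using eq by linarith
qed

lemma perK:
  assumes t: "0 \<le> t" "t \<le> 2*pi" and K: "3*D0+1 \<le> K" and eta: "0 \<le> \<eta>"
    and dec: "\<And>m. int K - 2*int D0 \<le> \<bar>m\<bar> \<Longrightarrow> cmod (rc m) \<le> \<eta>"
  shows "NS (dl t (ph K)) \<le> (1/4) * NS (dl t r) + 48 * NS (dl t (ps K)) + (16 * Clo + 40 * L^2) * t^2 + 16 * Chi * \<eta>^2"
proof -
  have 1: "NS (dl t (ph K)) \<le> 8 * NS (dl t (\<lambda>z. cnj (P z) * ph K z)) + (8 * L^2 * t^2) * NS (ph K)"
    by (rule S1[OF t(1)])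
  have 2: "NS (dl t (\<lambda>z. cnj (P z) * ph K z)) \<le> 2 * NS (dl t (H K)) + 2 * NS (dl t (\<lambda>z. P z * cnj (ps K z)))"
    by (rule S2)
  have 3: "NS (dl t (\<lambda>z. P z * cnj (ps K z))) \<le> 3 * NS (dl t (ps K)) + (2 * L^2 * t^2) * NS (ps K)"
    by (rule S3[OF t(1)])
  have 4: "NS (dl t (H K)) \<le> NS (dl t q) + Clo * t^2 + Chi * \<eta>^2" by (rule S4[OF t K eta dec])
  have 5: "NS (dl t q) \<le> (1/64) * NS (dl t r) + 0 * NS r" by (rule S5)
  have 6: "(8 * L^2 * t^2) * NS (ph K) \<le> 8 * L^2 * t^2"
    using ns_ph[of K] by (intro mult_left_le) auto
  have 7: "(2 * L^2 * t^2) * NS (ps K) \<le> 2 * L^2 * t^2"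
    using ns_ps[of K] by (intro mult_left_le) auto
  have "(16 * Clo + 40 * L^2) * t^2 = 16 * (Clo * t^2) + 40 * (L^2 * t^2)" by (simp add: algebra_simps)
  then show ?thesis using 1 2 3 4 5 6 7 by (simp add: algebra_simps)
qed

end


context Setup begin

definition sm where "sm t m = w t m * (cmod (rc m))^2"
definition Xs where "Xs t = infsum (\<lambda>m. if m < 0 then sm t m else 0) UNIV"
definition Ys where "Ys t = infsum (\<lambda>m. if 0 < m then sm t m else 0) UNIV"

lemma sm_nonneg: "0 \<le> sm t m" unfolding sm_def by (simp add: w_nonneg)

lemma hs_r: "0 \<le> t \<Longrightarrow> t \<le> 2*pi \<Longrightarrow> (sm t has_sum NS (dl t r)) UNIV"
  unfolding sm_def rc_def by (rule parseval_dl[OF cr])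

lemma summX: "0 \<le> t \<Longrightarrow> t \<le> 2*pi \<Longrightarrow> (\<lambda>m. if m < 0 then sm t m else 0) summable_on UNIV"
  by (rule summable_on_comparison_test[of "sm t"]) (use hs_r has_sum_iff sm_nonneg in auto)

lemma summY: "0 \<le> t \<Longrightarrow> t \<le> 2*pi \<Longrightarrow> (\<lambda>m. if 0 < m then sm t m else 0) summable_on UNIV"
  by (rule summable_on_comparison_test[of "sm t"]) (use hs_r has_sum_iff sm_nonneg in auto)

lemma Xs_nonneg: "0 \<le> Xs t" unfolding Xs_def by (rule infsum_nonneg) (simp add: sm_nonneg)
lemma Ys_nonneg: "0 \<le> Ys t" unfolding Ys_def by (rule infsum_nonneg) (simp add: sm_nonneg)

lemma XY:
  assumes t: "0 \<le> t" "t \<le> 2*pi"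
  shows "NS (dl t r) = Xs t + Ys t"
proof -
  have e: "sm t = (\<lambda>m. (if m < 0 then sm t m else 0) + (if 0 < m then sm t m else 0))"
    by (rule ext) (auto simp: sm_def w_zero)
  have "NS (dl t r) = infsum (sm t) UNIV" using hs_r[OF t] has_sum_iff by metis
  also have "\<dots> = Xs t + Ys t"
    unfolding Xs_def Ys_def by (subst e) (rule infsum_add[OF summX[OF t] summY[OF t]])
  finally show ?thesis .
qed

lemma Ys_ps:
  assumes t: "0 \<le> t" "t \<le> 2*pi"
  shows "NS (dl t (ps K)) \<le> Ys t"
  unfolding Ys_def
  by (rule has_sum_mono[OF parseval_dl[OF cps t] has_sum_infsum[OF summY[OF t]]])
     (auto simp: fc_ps cps_def sm_def w_nonneg)

lemma Xs_fin:
  assumes t: "0 \<le> t" "t \<le> 2*pi" and F: "finite F" "F \<subseteq> {-int K..int K}"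
  shows "sum (\<lambda>m. if m < 0 then sm t m else 0) F \<le> NS (dl t (ph K))"
proof -
  have "sum (\<lambda>m. if m < 0 then sm t m else 0) F \<le> (\<Sum>m\<in>F. w t m * (cmod (FC (ph K) m))^2)"
    by (rule sum_mono) (use F in \<open>auto simp: fc_ph cph_def sm_def w_nonneg\<close>)
  also have "\<dots> \<le> NS (dl t (ph K))"
    by (rule finite_sum_le_has_sum[OF parseval_dl[OF cph t]]) (use F in \<open>auto simp: w_nonneg\<close>)
  finally show ?thesis .
qed

lemma decay:
  assumes eta: "0 < \<eta>"
  shows "\<exists>N::int. \<forall>m. N \<le> \<bar>m\<bar> \<longrightarrow> cmod (rc m) \<le> \<eta>"
proof -
  define S where "S = {m. \<eta> < cmod (rc m)}"
  have "finite S"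
  proof (rule ccontr)
    assume inf: "infinite S"
    define n where "n = nat (ceiling (NS r / \<eta>^2)) + 1"
    obtain B where B: "finite B" "card B = n" "B \<subseteq> S" using infinite_arbitrarily_large[OF inf] by blast
    have "(\<Sum>m\<in>B. \<eta>^2) \<le> (\<Sum>m\<in>B. (cmod (FC r m))^2)"
    proof (rule sum_mono)
      fix m assume "m \<in> B"
      then have "\<eta> < cmod (FC r m)" using B(3) by (auto simp: S_def rc_def)
      then show "\<eta>^2 \<le> (cmod (FC r m))^2" using eta by (intro power_mono) auto
    qed
    also have "\<dots> \<le> NS r" by (rule bessel[OF cr B(1)])
    finally have "real n * \<eta>^2 \<le> NS r" using B(2) by simp
    moreover have "NS r / \<eta>^2 < real n" unfolding n_def by linarith
    then have "NS r < real n * \<eta>^2" using eta by (simp add: field_simps)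
    ultimately show False by linarith
  qed
  define N where "N = Max (insert 0 (abs ` S)) + 1"
  have "cmod (rc m) \<le> \<eta>" if "N \<le> \<bar>m\<bar>" for m
  proof (rule ccontr)
    assume "\<not> cmod (rc m) \<le> \<eta>"
    then have "m \<in> S" by (auto simp: S_def)
    then have "\<bar>m\<bar> \<le> Max (insert 0 (abs ` S))" using \<open>finite S\<close> by (intro Max_ge) auto
    then show False using that unfolding N_def by linarith
  qed
  then show ?thesis by blast
qed

definition Bc where "Bc = 2 * (16 * Clo + 40 * L^2)"

lemma Bc_nonneg: "0 \<le> Bc" unfolding Bc_def using Clo_nonneg by simp

lemma perT:
  assumes t: "0 \<le> t" "t \<le> 2*pi"
  shows "Xs t \<le> 65 * Ys t + Bc * t^2"
proof -
  define B where "B = 16 * Clo + 40 * L^2"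
  have B0: "0 \<le> B" unfolding B_def using Clo_nonneg by simp
  have key: "Xs t \<le> ((1/4) * (Xs t + Ys t) + 48 * Ys t + B * t^2) + \<epsilon>" if e: "0 < \<epsilon>" for \<epsilon>
  proof -
    define \<eta> where "\<eta> = min 1 (\<epsilon> / (16 * Chi + 1))"
    have eta0: "0 < \<eta>" using e Chi_nonneg by (simp add: \<eta>_def)
    have eta1: "\<eta> \<le> 1" by (simp add: \<eta>_def)
    have "\<eta> * \<eta> \<le> \<eta> * 1" using eta0 eta1 by (intro mult_left_mono) auto
    then have "\<eta>^2 \<le> \<eta>" by (simp add: power2_eq_square)
    moreover have "16 * Chi * \<eta> \<le> \<epsilon>"
    proof -
      have "16 * Chi * \<eta> \<le> 16 * Chi * (\<epsilon> / (16 * Chi + 1))"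
        using Chi_nonneg by (intro mult_left_mono) (auto simp: \<eta>_def)
      also have "\<dots> \<le> \<epsilon>" using Chi_nonneg e by (simp add: field_simps)
      finally show ?thesis .
    qed
    ultimately have eb: "16 * Chi * \<eta>^2 \<le> \<epsilon>"
      using Chi_nonneg by (meson mult_left_mono order_trans zero_le_mult_iff zero_le_numeral)
    obtain N where N: "\<And>m. N \<le> \<bar>m\<bar> \<Longrightarrow> cmod (rc m) \<le> \<eta>" using decay[OF eta0] by blast
    define Q where "Q = ((1/4) * (Xs t + Ys t) + 48 * Ys t + B * t^2) + \<epsilon>"
    have "infsum (\<lambda>m. if m < 0 then sm t m else 0) UNIV \<le> Q"
    proof (rule infsum_le_finite_sums[OF summX[OF t]])
      fix F :: "int set" assume F: "finite F" "F \<subseteq> UNIV"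
      define K where "K = 3*D0 + 1 + nat N + nat (Max (insert 0 (abs ` F)))"
      have FK: "F \<subseteq> {-int K..int K}"
      proof
        fix m assume "m \<in> F"
        then have "\<bar>m\<bar> \<le> Max (insert 0 (abs ` F))" using F by (intro Max_ge) auto
        then show "m \<in> {-int K..int K}" unfolding K_def by auto
      qed
      have K: "3*D0+1 \<le> K" unfolding K_def by simp
      have dec: "cmod (rc m) \<le> \<eta>" if "int K - 2*int D0 \<le> \<bar>m\<bar>" for m
      proof (rule N)
        have M0: "0 \<le> Max (insert 0 (abs ` F))" using F by (intro Max_ge) auto
        show "N \<le> \<bar>m\<bar>" using that M0 by (auto simp: K_def split: if_splits)
      qed
      have "sum (\<lambda>m. if m < 0 then sm t m else 0) F \<le> NS (dl t (ph K))"
        by (rule Xs_fin[OF t F(1) FK])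
      also have "\<dots> \<le> (1/4) * NS (dl t r) + 48 * NS (dl t (ps K)) + B * t^2 + 16 * Chi * \<eta>^2"
        unfolding B_def by (rule perK[OF t K less_imp_le[OF eta0] dec])
      also have "\<dots> \<le> (1/4) * (Xs t + Ys t) + 48 * Ys t + B * t^2 + \<epsilon>"
        using XY[OF t] Ys_ps[OF t, of K] eb by simp
      finally show "sum (\<lambda>m. if m < 0 then sm t m else 0) F \<le> Q"
        unfolding Q_def by simp
    qed
    then show ?thesis unfolding Q_def Xs_def .
  qed
  have "Xs t \<le> (1/4) * (Xs t + Ys t) + 48 * Ys t + B * t^2"
    by (rule field_le_epsilon) (rule key)
  moreover have "0 \<le> Ys t" "0 \<le> B * t^2" by (simp_all add: Ys_nonneg B0)
  ultimately show ?thesis unfolding Bc_def B_def[symmetric] by (simp add: algebra_simps)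
qed

end


lemma four_powr: "(4::real) powr y = 2 powr (2*y)"
proof -
  have "(4::real) powr y = (2 powr 2) powr y" by simp
  also have "\<dots> = 2 powr (2*y)" by (rule powr_powr)
  finally show ?thesis .
qed

lemma omega_eq: "((4::real) powr s)^n = (2^n) powr (2 * s)"
proof -
  have "((4::real) powr s)^n = 4 powr (real n * s)" by (simp add: powr_power)
  also have "\<dots> = 2 powr (2 * (real n * s))" by (rule four_powr)
  also have "\<dots> = (2 powr real n) powr (2 * s)" by (simp add: powr_powr mult_ac)
  also have "\<dots> = (2^n) powr (2 * s)" by (simp add: powr_realpow)
  finally show ?thesis .
qed

lemma cos_nonpos: "pi/2 \<le> x \<Longrightarrow> x \<le> pi \<Longrightarrow> cos x \<le> 0"
  using cos_ge_zero[of "pi - x"] by (simp add: cos_diff)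

lemma w_eq: "w t m = 2 - 2 * cos (of_int m * t)"
  unfolding w_def by (rule cis_minus1_sq)

lemma low_bnd:
  assumes s: "0 < s" and m: "m \<noteq> 0" and J: "\<bar>m\<bar> < 2^J"
  shows "\<bar>real_of_int m\<bar> powr (2 * s) \<le> (1/2) * (\<Sum>j\<le>J. ((4::real) powr s)^j * w (pi/2^j) m)"
proof -
  define n where "n = nat \<bar>m\<bar>"
  have n1: "1 \<le> n" using m by (simp add: n_def)
  obtain k where k: "2^k \<le> n" "n < 2^(k+1)" using ex_power_ivl1[of 2 n] n1 by auto
  have nm: "real n = \<bar>real_of_int m\<bar>" by (simp add: n_def)
  have "n < 2^J" using J unfolding n_def by (simp add: nat_less_iff)
  then have "(2::nat)^k < 2^J" using k(1) by linarith
  then have kJ: "k+1 \<le> J" by (simp add: power_strict_increasing_iff)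
  define j where "j = k + 1"
  have "real (2^k) \<le> real n" using k(1) by (simp only: of_nat_le_iff)
  moreover have "real n < real (2^(k+1))" using k(2) by (simp only: of_nat_less_iff)
  ultimately have kr: "2^k \<le> real n" "real n < 2^(k+1)" by simp_all
  have "cos (of_int m * (pi/2^j)) = cos (real n * (pi / 2^j))"
    by (cases "m \<ge> 0") (auto simp: nm abs_if)
  also have "\<dots> \<le> 0"
  proof (rule cos_nonpos)
    have "pi/2 = 2^k * (pi/2^j)" by (simp add: j_def field_simps)
    also have "\<dots> \<le> real n * (pi/2^j)" using kr by (intro mult_right_mono) auto
    finally show "pi/2 \<le> real n * (pi/2^j)" .
    have "real n * (pi/2^j) \<le> 2^j * (pi/2^j)" using kr unfolding j_def by (intro mult_right_mono) auto
    then show "real n * (pi/2^j) \<le> pi" by simp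
  qed
  finally have w2: "2 \<le> w (pi/2^j) m" by (simp add: w_eq)
  have "\<bar>real_of_int m\<bar> powr (2 * s) \<le> (2^j) powr (2 * s)"
    using kr s unfolding j_def nm[symmetric] by (intro powr_mono2) auto
  also have "\<dots> = ((4::real) powr s)^j" by (simp add: omega_eq)
  finally have o: "\<bar>real_of_int m\<bar> powr (2 * s) \<le> ((4::real) powr s)^j" .
  have "((4::real) powr s)^j * 2 \<le> ((4::real) powr s)^j * w (pi/2^j) m"
    using w2 by (intro mult_left_mono) auto
  also have "\<dots> \<le> (\<Sum>j\<le>J. ((4::real) powr s)^j * w (pi/2^j) m)"
    by (rule member_le_sum) (use kJ in \<open>auto simp: j_def w_nonneg\<close>)
  finally show ?thesis using o by linarith
qed

lemma up_bnd:
  assumes s: "0 < s" "s < 1" and m: "0 < m"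
  shows "(\<Sum>j\<le>J. ((4::real) powr s)^j * w (pi/2^j) m)
        \<le> (4 * (4 powr s) / (4 powr s - 1) + pi^2 / (1 - 4 powr s / 4)) * real_of_int m powr (2 * s)"
proof -
  define x where "x = (4::real) powr s"
  define \<rho> where "\<rho> = x / 4"
  have "(4::real) powr 0 < 4 powr s" using s by (intro powr_less_mono) auto
  then have x1: "1 < x" unfolding x_def by simp
  have rho: "0 < \<rho>" "\<rho> < 1"
  proof -
    show "0 < \<rho>" using x1 by (simp add: \<rho>_def)
    have "x < 4 powr 1" unfolding x_def using s by (intro powr_less_mono) auto
    then show "\<rho> < 1" by (simp add: \<rho>_def)
  qed
  define n where "n = nat m"
  have n1: "1 \<le> n" using m by (simp add: n_def)
  have nm: "real n = real_of_int m" using m by (simp add: n_def)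
  obtain k where k: "2^k \<le> n" "n < 2^(k+1)" using ex_power_ivl1[of 2 n] n1 by auto
  have "real (2^k) \<le> real n" using k(1) by (simp only: of_nat_le_iff)
  moreover have "real n < real (2^(k+1))" using k(2) by (simp only: of_nat_less_iff)
  ultimately have kr: "2^k \<le> real n" "real n < 2^(k+1)" by simp_all
  define M where "M = real n powr (2 * s)"
  have S: "{..J} = {j\<in>{..J}. j \<le> k} \<union> {j\<in>{..J}. k < j}" by auto
  have "(\<Sum>j\<le>J. x^j * w (pi/2^j) m) = (\<Sum>j\<in>{j\<in>{..J}. j \<le> k}. x^j * w (pi/2^j) m) + (\<Sum>j\<in>{j\<in>{..J}. k < j}. x^j * w (pi/2^j) m)"
    by (subst S, rule sum.union_disjoint) auto
  moreover have "(\<Sum>j\<in>{j\<in>{..J}. j \<le> k}. x^j * w (pi/2^j) m) \<le> 4 * x / (x - 1) * M"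
  proof -
    have "(\<Sum>j\<in>{j\<in>{..J}. j \<le> k}. x^j * w (pi/2^j) m) \<le> (\<Sum>j\<in>{..<k+1}. 4 * x^j)"
    proof -
      have "(\<Sum>j\<in>{j\<in>{..J}. j \<le> k}. x^j * w (pi/2^j) m) \<le> (\<Sum>j\<in>{j\<in>{..J}. j \<le> k}. 4 * x^j)"
        by (rule sum_mono) (use x1 w_le4 in \<open>auto intro: mult_left_mono[of _ 4, simplified mult.commute]\<close>)
      also have "\<dots> \<le> (\<Sum>j\<in>{..<k+1}. 4 * x^j)" by (rule sum_mono2) (use x1 in auto)
      finally show ?thesis .
    qed
    also have "\<dots> = 4 * (\<Sum>j\<in>{..<k+1}. x^j)" by (rule sum_distrib_left[symmetric])
    also have "(\<Sum>j\<in>{..<k+1}. x^j) = (x^(k+1) - 1) / (x - 1)" by (rule geometric_sum) (use x1 in simp)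
    also have "4 * ((x^(k+1) - 1) / (x - 1)) \<le> 4 * (x^(k+1) / (x - 1))"
      using x1 by (intro mult_left_mono divide_right_mono) auto
    also have "x^(k+1) = x * x^k" by simp
    also have "x^k \<le> M"
    proof -
      have "x^k = (2^k) powr (2 * s)" unfolding x_def by (rule omega_eq)
      also have "\<dots> \<le> M" unfolding M_def using kr s by (intro powr_mono2) auto
      finally show ?thesis .
    qed
    then have "4 * (x * x^k / (x - 1)) \<le> 4 * (x * M / (x - 1))"
      using x1 by (intro mult_left_mono divide_right_mono) auto
    finally show ?thesis by simp
  qed
  moreover have "(\<Sum>j\<in>{j\<in>{..J}. k < j}. x^j * w (pi/2^j) m) \<le> pi^2 / (1 - \<rho>) * M"
  proof -
    define G where "G = (\<Sum>j\<in>{j\<in>{..J}. k < j}. \<rho>^(j - (k+1)))"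
    have "(\<Sum>j\<in>{j\<in>{..J}. k < j}. x^j * w (pi/2^j) m) \<le> (\<Sum>j\<in>{j\<in>{..J}. k < j}. pi^2 * (real n)^2 * \<rho>^j)"
    proof (rule sum_mono)
      fix j
      have "w (pi/2^j) m \<le> (of_int m * (pi/2^j))^2" by (rule w_le_sq)
      also have "\<dots> = pi^2 * (real n)^2 / 4^j"
      proof -
        have "(2::real)^j * 2^j = (2*2)^j" by (rule power_mult_distrib[symmetric])
        then have "(4::real)^j = (2^j)^2" by (simp add: power2_eq_square)
        then show ?thesis by (simp add: nm power_mult_distrib power_divide)
      qed
      finally have "x^j * w (pi/2^j) m \<le> x^j * (pi^2 * (real n)^2 / 4^j)"
        using x1 by (intro mult_left_mono) auto
      also have "\<dots> = pi^2 * (real n)^2 * \<rho>^j" by (simp add: \<rho>_def power_divide)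
      finally show "x^j * w (pi/2^j) m \<le> pi^2 * (real n)^2 * \<rho>^j" .
    qed
    also have "\<dots> = pi^2 * ((real n)^2 * \<rho>^(k+1)) * G"
    proof -
      have "\<rho>^j = \<rho>^(k+1) * \<rho>^(j - (k+1))" if "k < j" for j
        using that by (subst power_add[symmetric]) simp
      then show ?thesis unfolding G_def sum_distrib_left by (intro sum.cong) (auto simp: mult_ac)
    qed
    also have "\<dots> \<le> pi^2 * M * G"
    proof -
      have "(real n)^2 * \<rho>^(k+1) \<le> M"
      proof -
        have "\<rho>^(k+1) = (4 powr (s - 1))^(k+1)"
          by (simp add: \<rho>_def x_def powr_diff)
        also have "\<dots> = (2^(k+1)) powr (2*(s-1))" by (rule omega_eq)
        also have "\<dots> \<le> (real n) powr (2*(s-1))"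
          using kr s n1 by (intro powr_mono2') auto
        finally have "(real n)^2 * \<rho>^(k+1) \<le> (real n)^2 * (real n) powr (2*(s-1))"
          by (intro mult_left_mono) auto
        also have "\<dots> = M"
        proof -
          have e: "(real n)^2 = real n powr 2" using n1 by (simp add: powr_realpow)
          have e1: "(real n)^2 * real n powr (2*(s-1)) = real n powr 2 * real n powr (2*(s-1))"
            by (simp only: e)
          have e2: "real n powr 2 * real n powr (2*(s-1)) = real n powr (2 + 2*(s-1))"
            by (rule powr_add[symmetric])
          have e3: "(2::real) + 2*(s-1) = 2 * s" by simp
          show ?thesis using e1 e2[unfolded e3] by (simp only: M_def)
        qed
        finally show ?thesis .
      qed
      moreover have "0 \<le> G" unfolding G_def using rho by (intro sum_nonneg) auto
      ultimately show ?thesis by (intro mult_right_mono mult_left_mono) auto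
    qed
    also have "\<dots> \<le> pi^2 * M * (1 / (1 - \<rho>))"
    proof -
      have "G = (\<Sum>i\<in>(\<lambda>j. j - (k+1)) ` {j\<in>{..J}. k < j}. \<rho>^i)"
        unfolding G_def by (rule sum.reindex[symmetric, unfolded o_def]) (auto simp: inj_on_def)
      also have "\<dots> \<le> 1 / (1 - \<rho>)" using geometric_sum_less[OF rho] by (intro less_imp_le) auto
      finally have "G \<le> 1 / (1 - \<rho>)" .
      moreover have "0 \<le> M" unfolding M_def by simp
      ultimately show ?thesis by (intro mult_left_mono) auto
    qed
    finally show ?thesis by simp
  qed
  ultimately show ?thesis
    unfolding x_def[symmetric] \<rho>_def[symmetric] M_def nm by (simp add: algebra_simps)
qed



lemma has_sum_sum_fin:
  fixes f :: "'i \<Rightarrow> 'a \<Rightarrow> real"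
  assumes "finite I" "\<And>i. i \<in> I \<Longrightarrow> (f i has_sum S i) A"
  shows "((\<lambda>x. \<Sum>i\<in>I. f i x) has_sum (\<Sum>i\<in>I. S i)) A"
  using assms
proof (induction I rule: finite_induct)
  case empty then show ?case by simp
next
  case (insert x F)
  then have h1: "(f x has_sum S x) A" and h2: "((\<lambda>y. \<Sum>i\<in>F. f i y) has_sum sum S F) A" by auto
  show ?case using has_sum_add[OF h1 h2] insert.hyps by simp
qed

context Setup begin

definition Cs :: "real \<Rightarrow> real" where
  "Cs s = 4 * (4 powr s) / (4 powr s - 1) + pi^2 / (1 - 4 powr s / 4)"

lemma neg_bound:
  assumes s: "0 < s" "s < 1"
    and hpos: "(\<lambda>m. if 0 < m then real_of_int m powr (2 * s) * (cmod (rc m))^2 else 0) summable_on UNIV"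
    and F: "finite F" "F \<subseteq> {m. m < 0}"
  shows "(\<Sum>m\<in>F. \<bar>real_of_int m\<bar> powr (2 * s) * (cmod (rc m))^2)
     \<le> (1/2) * (65 * (Cs s * infsum (\<lambda>m. if 0 < m then real_of_int m powr (2 * s) * (cmod (rc m))^2 else 0) UNIV)
                 + Bc * (pi^2 / (1 - 4 powr s / 4)))"
proof -
  define x where "x = (4::real) powr s"
  define \<rho> where "\<rho> = x / 4"
  have x1: "1 < x"
  proof -
    have "(4::real) powr 0 < 4 powr s" using s by (intro powr_less_mono) auto
    then show ?thesis unfolding x_def by simp
  qed
  have rho: "0 < \<rho>" "\<rho> < 1"
  proof -
    show "0 < \<rho>" using x1 by (simp add: \<rho>_def)
    have "x < 4 powr 1" unfolding x_def using s by (intro powr_less_mono) auto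
    then show "\<rho> < 1" by (simp add: \<rho>_def)
  qed
  define \<omega> where "\<omega> j = x^j" for j :: nat
  define tt where "tt j = pi / 2^j" for j :: nat
  have tt: "0 \<le> tt j" "tt j \<le> 2*pi" for j
  proof -
    show "0 \<le> tt j" by (simp add: tt_def)
    have "pi / 2^j \<le> pi / 1" by (intro divide_left_mono) auto
    then show "tt j \<le> 2*pi" unfolding tt_def using pi_gt_zero by linarith
  qed
  define Yp where "Yp = infsum (\<lambda>m. if 0 < m then real_of_int m powr (2 * s) * (cmod (rc m))^2 else 0) UNIV"
  define J where "J = nat (Max (insert 0 (abs ` F)))"
  have FJ: "\<bar>m\<bar> < 2^J" if "m \<in> F" for m
  proof -
    have "\<bar>m\<bar> \<le> Max (insert 0 (abs ` F))" using F that by (intro Max_ge) auto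
    moreover have "int J < 2^J" by (metis less_exp of_nat_less_iff of_nat_numeral of_nat_power)
    moreover have "0 \<le> Max (insert 0 (abs ` F))" using F by (intro Max_ge) auto
    ultimately show ?thesis unfolding J_def by linarith
  qed
  have "(\<Sum>m\<in>F. \<bar>real_of_int m\<bar> powr (2 * s) * (cmod (rc m))^2)
      \<le> (\<Sum>m\<in>F. ((1/2) * (\<Sum>j\<le>J. \<omega> j * w (tt j) m)) * (cmod (rc m))^2)"
  proof (rule sum_mono)
    fix m assume m: "m \<in> F"
    have "\<bar>real_of_int m\<bar> powr (2 * s) \<le> (1/2) * (\<Sum>j\<le>J. \<omega> j * w (tt j) m)"
      unfolding \<omega>_def tt_def x_def by (rule low_bnd[OF s(1)]) (use m F FJ in auto)
    then show "\<bar>real_of_int m\<bar> powr (2 * s) * (cmod (rc m))^2 \<le> ((1/2) * (\<Sum>j\<le>J. \<omega> j * w (tt j) m)) * (cmod (rc m))^2"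
      by (intro mult_right_mono) auto
  qed
  also have "\<dots> = (1/2) * (\<Sum>j\<le>J. \<omega> j * (\<Sum>m\<in>F. if m < 0 then sm (tt j) m else 0))"
  proof -
    have "(\<Sum>m\<in>F. ((1/2) * (\<Sum>j\<le>J. \<omega> j * w (tt j) m)) * (cmod (rc m))^2)
        = (1/2) * (\<Sum>m\<in>F. \<Sum>j\<le>J. \<omega> j * (w (tt j) m * (cmod (rc m))^2))"
      by (simp add: sum_distrib_left sum_distrib_right mult_ac)
    also have "\<dots> = (1/2) * (\<Sum>j\<le>J. \<Sum>m\<in>F. \<omega> j * (w (tt j) m * (cmod (rc m))^2))"
      by (subst sum.swap) simp
    also have "\<dots> = (1/2) * (\<Sum>j\<le>J. \<omega> j * (\<Sum>m\<in>F. if m < 0 then sm (tt j) m else 0))"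
      using F by (simp add: sum_distrib_left sm_def subset_iff cong: sum.cong)
    finally show ?thesis .
  qed
  also have "\<dots> \<le> (1/2) * (\<Sum>j\<le>J. \<omega> j * (65 * Ys (tt j) + Bc * (tt j)^2))"
  proof (rule mult_left_mono[OF sum_mono])
    fix j
    have "(\<Sum>m\<in>F. if m < 0 then sm (tt j) m else 0) \<le> Xs (tt j)"
      unfolding Xs_def by (rule finite_sum_le_infsum[OF summX[OF tt]]) (use F in \<open>auto simp: sm_nonneg\<close>)
    also have "\<dots> \<le> 65 * Ys (tt j) + Bc * (tt j)^2" by (rule perT[OF tt])
    finally show "\<omega> j * (\<Sum>m\<in>F. if m < 0 then sm (tt j) m else 0) \<le> \<omega> j * (65 * Ys (tt j) + Bc * (tt j)^2)"
      using x1 by (intro mult_left_mono) (auto simp: \<omega>_def)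
  qed auto
  also have "\<dots> = (1/2) * (65 * (\<Sum>j\<le>J. \<omega> j * Ys (tt j)) + Bc * (\<Sum>j\<le>J. \<omega> j * (tt j)^2))"
    by (simp add: sum.distrib sum_distrib_left algebra_simps)
  also have "\<dots> \<le> (1/2) * (65 * (Cs s * Yp) + Bc * (pi^2 / (1 - 4 powr s / 4)))"
  proof -
    have A: "(\<Sum>j\<le>J. \<omega> j * Ys (tt j)) \<le> Cs s * Yp"
    proof -
      have h1: "((\<lambda>m. \<Sum>j\<le>J. \<omega> j * (if 0 < m then sm (tt j) m else 0)) has_sum (\<Sum>j\<le>J. \<omega> j * Ys (tt j))) UNIV"
        by (rule has_sum_sum_fin) (auto intro!: has_sum_cmult_right has_sum_infsum summY[OF tt] simp: Ys_def)
      have h2: "((\<lambda>m. Cs s * (if 0 < m then real_of_int m powr (2 * s) * (cmod (rc m))^2 else 0)) has_sum (Cs s * Yp)) UNIV"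
        unfolding Yp_def by (rule has_sum_cmult_right) (rule has_sum_infsum[OF hpos])
      show ?thesis
      proof (rule has_sum_mono[OF h1 h2])
        fix m :: int
        show "(\<Sum>j\<le>J. \<omega> j * (if 0 < m then sm (tt j) m else 0)) \<le> Cs s * (if 0 < m then real_of_int m powr (2 * s) * (cmod (rc m))^2 else 0)"
        proof (cases "0 < m")
          case True
          have "(\<Sum>j\<le>J. \<omega> j * (if 0 < m then sm (tt j) m else 0)) = (\<Sum>j\<le>J. \<omega> j * w (tt j) m) * (cmod (rc m))^2"
            using True unfolding sm_def sum_distrib_right by (simp add: mult_ac)
          also have "\<dots> \<le> (Cs s * real_of_int m powr (2 * s)) * (cmod (rc m))^2"
            unfolding \<omega>_def tt_def x_def Cs_def by (intro mult_right_mono up_bnd s True) auto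
          finally show ?thesis using True by (simp add: mult_ac)
        qed simp
      qed
    qed
    have B: "(\<Sum>j\<le>J. \<omega> j * (tt j)^2) \<le> pi^2 / (1 - 4 powr s / 4)"
    proof -
      have "(\<Sum>j\<le>J. \<omega> j * (tt j)^2) = pi^2 * (\<Sum>j\<le>J. \<rho>^j)"
      proof -
        have "\<omega> j * (tt j)^2 = pi^2 * \<rho>^j" for j
        proof -
          have "(2::real)^j * 2^j = (2*2)^j" by (rule power_mult_distrib[symmetric])
          then have "((2::real)^j)^2 = 4^j" by (simp add: power2_eq_square)
          then show ?thesis by (simp add: \<omega>_def tt_def \<rho>_def power_divide)
        qed
        then show ?thesis by (simp add: sum_distrib_left)
      qed
      also have "\<dots> \<le> pi^2 * (1 / (1 - \<rho>))"
        using geometric_sum_less[OF rho, of "{..J}"] by (intro mult_left_mono) auto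
      finally show ?thesis by (simp add: \<rho>_def x_def)
    qed
    have "0 \<le> Bc" by (rule Bc_nonneg)
    then show ?thesis using A B by (intro mult_left_mono add_mono) auto
  qed
  finally show ?thesis unfolding Yp_def .
qed

lemma neg_summable:
  assumes s: "0 < s" "s < 1"
    and hpos: "(\<lambda>m. if 0 < m then real_of_int m powr (2 * s) * (cmod (rc m))^2 else 0) summable_on UNIV"
  shows "(\<lambda>m. \<bar>real_of_int m\<bar> powr (2 * s) * (cmod (rc m))^2) summable_on {m. m < 0}"
proof (rule nonneg_bdd_above_summable_on)
  define M where "M = (1/2) * (65 * (Cs s * infsum (\<lambda>m. if 0 < m then real_of_int m powr (2 * s) * (cmod (rc m))^2 else 0) UNIV)
                 + Bc * (pi^2 / (1 - 4 powr s / 4)))"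
  show "bdd_above (sum (\<lambda>m. \<bar>real_of_int m\<bar> powr (2 * s) * (cmod (rc m))^2) ` {F. F \<subseteq> {m. m < 0} \<and> finite F})"
  proof (rule bdd_aboveI[where M=M])
    fix y assume "y \<in> sum (\<lambda>m. \<bar>real_of_int m\<bar> powr (2 * s) * (cmod (rc m))^2) ` {F. F \<subseteq> {m. m < 0} \<and> finite F}"
    then obtain F where F: "F \<subseteq> {m. m < 0}" "finite F" "y = sum (\<lambda>m. \<bar>real_of_int m\<bar> powr (2 * s) * (cmod (rc m))^2) F"
      by auto
    show "y \<le> M" unfolding F(3) M_def by (rule neg_bound[OF s hpos F(2) F(1)])
  qed
qed auto

lemma rc_eq: "rc m = FC f m - a m"
  unfolding rc_def r_def by (simp add: fc_diff[OF cf cP] fc_tp_good[OF ga])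

end



lemma sq_diff_le: "(cmod (x - y))^2 \<le> 2 * (cmod x)^2 + 2 * (cmod y)^2"
  by (rule sq_tri) (auto intro: norm_triangle_ineq4)

theorem mainTheorem1:
  fixes s :: real and f :: "complex \<Rightarrow> complex"
  assumes "0 < s" and "s < 1"
    and "continuous_on (sphere 0 1) f"
    and "f ` sphere 0 1 \<subseteq> sphere 0 1"
    and "summable (\<lambda>n::nat. real n powr (2 * s) * (cmod (fourier_coeff f (int n)))\<^sup>2)"
  shows "(\<lambda>n::int. \<bar>real_of_int n\<bar> powr (2 * s) * (cmod (fourier_coeff f n))\<^sup>2) summable_on UNIV
         \<and> f \<in> Hs_circle s"
proof -
  have s: "0 < s" "s < 1" using assms(1,2) by auto
  have cf: "cc f" using assms(3) .
  have f1: "cmod (f z) = 1" if "z \<in> sphere 0 1" for z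
  proof -
    have "f z \<in> sphere 0 1" using assms(4) that by blast
    then show ?thesis by simp
  qed
  obtain D0 a where ga: "good D0 a" and appr: "\<forall>z\<in>sphere 0 1. norm (f z - tp D0 a z) \<le> 1/16"
    using tp_approx[OF cf, of "1/16"] by auto
  interpret S: Setup f D0 a by unfold_locales (use cf f1 ga appr in auto)
  define g where "g m = \<bar>real_of_int m\<bar> powr (2 * s) * (cmod (fourier_coeff f m))^2" for m :: int
  define ga' where "ga' m = \<bar>real_of_int m\<bar> powr (2 * s) * (cmod (a m))^2" for m :: int
  have g0: "0 \<le> g m" for m by (simp add: g_def)
  have fa: "finite {m. ga' m \<noteq> 0}"
  proof (rule finite_subset[of _ "{-int D0..int D0}"])
    show "{m. ga' m \<noteq> 0} \<subseteq> {-int D0..int D0}"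
    proof
      fix m assume "m \<in> {m. ga' m \<noteq> 0}"
      then have "a m \<noteq> 0" by (auto simp: ga'_def)
      then have "\<not> int D0 < \<bar>m\<bar>" using ga by (auto simp: good_def)
      then show "m \<in> {-int D0..int D0}" by auto
    qed
  qed simp
  have sga: "ga' summable_on A" for A
    by (rule finite_nonzero_values_imp_summable_on) (rule finite_subset[OF _ fa], auto)
  have pos: "g summable_on (range int)"
  proof -
    have "(g \<circ> int) summable_on UNIV"
      using summable_on_UNIV_nonneg_real_iff[of "g \<circ> int"] assms(5) by (simp add: g_def o_def)
    then show ?thesis by (subst summable_on_reindex) (auto simp: inj_on_def)
  qed
  have hposc: "(\<lambda>m. if 0 < m then g m else 0) summable_on UNIV"
  proof -
    have "g summable_on (range int) \<longleftrightarrow> (\<lambda>m. if 0 < m then g m else 0) summable_on UNIV"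
    proof (rule summable_on_cong_neutral)
      fix x :: int assume "x \<in> UNIV - range int"
      then have "x < 0" by (metis Diff_iff nonneg_int_cases not_less rangeI)
      then show "(if 0 < x then g x else 0) = 0" by simp
    next
      fix x :: int assume "x \<in> range int \<inter> UNIV"
      then show "g x = (if 0 < x then g x else 0)" using s by (auto simp: g_def)
    qed auto
    with pos show ?thesis by simp
  qed
  have hpos: "(\<lambda>m. if 0 < m then real_of_int m powr (2 * s) * (cmod (S.rc m))^2 else 0) summable_on UNIV"
  proof (rule summable_on_comparison_test)
    show "(\<lambda>m. 2 * (if 0 < m then g m else 0) + 2 * ga' m) summable_on UNIV"
      by (intro summable_on_add summable_on_cmult_right hposc sga)
  next
    fix m :: int
    show "(if 0 < m then real_of_int m powr (2 * s) * (cmod (S.rc m))^2 else 0) \<le> 2 * (if 0 < m then g m else 0) + 2 * ga' m"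
    proof (cases "0 < m")
      case True
      have "(cmod (S.rc m))^2 \<le> 2 * (cmod (fourier_coeff f m))^2 + 2 * (cmod (a m))^2"
        unfolding S.rc_eq by (rule sq_diff_le)
      then have "real_of_int m powr (2 * s) * (cmod (S.rc m))^2 \<le> real_of_int m powr (2 * s) * (2 * (cmod (fourier_coeff f m))^2 + 2 * (cmod (a m))^2)"
        by (intro mult_left_mono) auto
      then show ?thesis using True by (simp add: g_def ga'_def algebra_simps)
    qed (simp add: ga'_def)
  qed (auto)
  have neg: "(\<lambda>m. \<bar>real_of_int m\<bar> powr (2 * s) * (cmod (S.rc m))^2) summable_on {m. m < 0}"
    by (rule S.neg_summable[OF s hpos])
  have negc: "g summable_on {m. m < 0}"
  proof (rule summable_on_comparison_test)
    show "(\<lambda>m. 2 * (\<bar>real_of_int m\<bar> powr (2 * s) * (cmod (S.rc m))^2) + 2 * ga' m) summable_on {m. m < 0}"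
      by (intro summable_on_add summable_on_cmult_right neg sga)
  next
    fix m :: int
    have "(cmod (fourier_coeff f m))^2 \<le> 2 * (cmod (S.rc m))^2 + 2 * (cmod (a m))^2"
    proof -
      have "fourier_coeff f m = S.rc m - (- a m)" by (simp add: S.rc_eq)
      then show ?thesis using sq_diff_le[of "S.rc m" "- a m"] by simp
    qed
    then have "g m \<le> \<bar>real_of_int m\<bar> powr (2 * s) * (2 * (cmod (S.rc m))^2 + 2 * (cmod (a m))^2)"
      unfolding g_def by (intro mult_left_mono) auto
    then show "g m \<le> 2 * (\<bar>real_of_int m\<bar> powr (2 * s) * (cmod (S.rc m))^2) + 2 * ga' m"
      by (simp add: ga'_def algebra_simps)
  qed (auto simp: g0)
  have U: "UNIV = {m::int. m < 0} \<union> range int"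
    by (auto simp: image_iff) (metis nonneg_int_cases not_less)
  have all: "g summable_on UNIV"
    by (subst U) (rule summable_on_union[OF negc pos])
  have meas: "f \<in> borel_measurable (restrict_space lborel (sphere 0 1))"
  proof -
    have "f \<in> borel_measurable (restrict_space borel (sphere 0 1))"
      by (rule borel_measurable_continuous_on_restrict[OF cf])
    moreover have "measurable (restrict_space lborel (sphere (0::complex) 1)) (borel :: complex measure)
        = measurable (restrict_space borel (sphere 0 1)) borel"
      by (rule measurable_cong_sets[OF sets_restrict_space_cong[OF sets_lborel] refl])
    ultimately show ?thesis by simp
  qed
  have sum: "(\<lambda>n::int. \<bar>real_of_int n\<bar> powr (2 * s) * (cmod (fourier_coeff f n))\<^sup>2) summable_on UNIV"
  proof -
    have "g = (\<lambda>n::int. \<bar>real_of_int n\<bar> powr (2 * s) * (cmod (fourier_coeff f n))\<^sup>2)"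
      by (rule ext) (simp add: g_def)
    then show ?thesis using all by simp
  qed
  show ?thesis using sum meas assms(4) by (simp add: Hs_circle_def)
qed


end
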